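(* Let $p$ be a prime, let $\mathcal{F}$ be a saturated fusion system on a finite $p$-group $S$, and let $\Omega$ be a characteristic biset for $\mathcal{F}$. Consider the square matrix \[ \bigl( |P\backslash \Omega /Q| \bigr)_{P,Q}, \] whose rows and columns are indexed by the $\mathcal{F}$-conjugacy classes of subgroups of $S$ (with $P,Q$ representatives) and whose $(P,Q)$-entry is the number of $(P,Q)$-orbits of $\Omega$ (orbits of $P\times Q$ acting by $(u,v)\cdot x=uxv^{-1}$). Then the rank of this matrix (over $\mathbb{Q}$) is equal to the number of $\mathcal{F}$-conjugacy classes of cyclic subgroups of $S$.
   Context: A saturated fusion system $\mathcal{F}$ on a finite $p$-group $S$ is a category whose objects are the subgroups of $S$ and whose morphisms are injective group homomorphisms, containing conjugations by elements of $S$, closed under restriction and inverses, and satisfying the Broto–Levi–Oliver saturation axioms. $P,P'\leq S$ are $\mathcal{F}$-conjugate if some morphism of $\mathcal{F}$ is an isomorphism $P\to P'$. An $(S,S)$-biset is a finite set with commuting left and right $S$-actions; it is viewed as a left $S\times S$-set via $(s,t)\cdot x = sxt^{-1}$. A left $S$-set $X$ is $\mathcal{F}$-stable if for every $P\leq S$ and every morphism $\varphi\colon P\to S$ in $\mathcal{F}$, the $P$-sets obtained by restricting the $S$-action along the inclusion $P\hookrightarrow S$ and along $\varphi$ are isomorphic. An $(S,S)$-biset is $\mathcal{F}$-stable if, as a left $S\times S$-set, it is $(\mathcal{F}\times\mathcal{F})$-stable (i.e. stable under restriction along $\varphi$ on the left and $\psi$ on the right for $\mathcal{F}$-morphisms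 $\varphi,\psi$). It is $\mathcal{F}$-generated if every isotropy subgroup of the left $S\times S$-action is of the form $\Delta(P,\varphi)=\{(u,\varphi(u))\mid u\in P\}$ with $P\leq S$ and $\varphi\colon P\to S$ in $\mathcal{F}$. A characteristic biset for $\mathcal{F}$ is a finite $(S,S)$-biset $\Omega$ that is $\mathcal{F}$-stable, $\mathcal{F}$-generated, and such that $|\Omega|/|S|$ is not divisible by $p$. *)

theory Defs
  imports "HOL-Algebra.Elementary_Groups" "Jordan_Normal_Form.DL_Rank"
begin

text \<open>A fusion system on S is encoded by the predicate F P phi, meaning that
  phi restricted to P is a morphism P -> S of the fusion system.  Since
  Hom(P,Q) is the set of morphisms P -> S with image in Q, this loses nothing.\<close>

definition fs_conj :: "('a, 'b) monoid_scheme \<Rightarrow> 'a \<Rightarrow> 'a \<Rightarrow> 'a" where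
  "fs_conj S g x = g \<otimes>\<^bsub>S\<^esub> x \<otimes>\<^bsub>S\<^esub> inv\<^bsub>S\<^esub> g"

definition fs_normalizer :: "('a, 'b) monoid_scheme \<Rightarrow> 'a set \<Rightarrow> 'a set" where
  "fs_normalizer S P = {g \<in> carrier S. fs_conj S g ` P = P}"

definition fs_centralizer :: "('a, 'b) monoid_scheme \<Rightarrow> 'a set \<Rightarrow> 'a set" where
  "fs_centralizer S P = {g \<in> carrier S. \<forall>x\<in>P. g \<otimes>\<^bsub>S\<^esub> x = x \<otimes>\<^bsub>S\<^esub> g}"

definition fusion_system :: "('a, 'b) monoid_scheme \<Rightarrow> ('a set \<Rightarrow> ('a \<Rightarrow> 'a) \<Rightarrow> bool) \<Rightarrow> bool" where
  "fusion_system S F \<longleftrightarrow>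
     (\<forall>P \<phi>. F P \<phi> \<longrightarrow> subgroup P S \<and> \<phi> \<in> hom (S\<lparr>carrier := P\<rparr>) S \<and> inj_on \<phi> P) \<and>
     (\<forall>P \<phi> \<psi>. F P \<phi> \<and> (\<forall>x\<in>P. \<psi> x = \<phi> x) \<longrightarrow> F P \<psi>) \<and>
     (\<forall>P g. subgroup P S \<and> g \<in> carrier S \<longrightarrow> F P (fs_conj S g)) \<and>
     (\<forall>P Q \<phi>. F P \<phi> \<and> subgroup Q S \<and> Q \<subseteq> P \<longrightarrow> F Q \<phi>) \<and>
     (\<forall>P \<phi> \<psi>. F P \<phi> \<and> F (\<phi> ` P) \<psi> \<longrightarrow> F P (\<psi> \<circ> \<phi>)) \<and>
     (\<forall>P \<phi>. F P \<phi> \<longrightarrow> F (\<phi> ` P) (inv_into P \<phi>))"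

definition fconj :: "('a, 'b) monoid_scheme \<Rightarrow> ('a set \<Rightarrow> ('a \<Rightarrow> 'a) \<Rightarrow> bool) \<Rightarrow> 'a set \<Rightarrow> 'a set \<Rightarrow> bool" where
  "fconj S F P Q \<longleftrightarrow> (\<exists>\<phi>. F P \<phi> \<and> \<phi> ` P = Q)"

definition fully_centralized :: "('a, 'b) monoid_scheme \<Rightarrow> ('a set \<Rightarrow> ('a \<Rightarrow> 'a) \<Rightarrow> bool) \<Rightarrow> 'a set \<Rightarrow> bool" where
  "fully_centralized S F P \<longleftrightarrow>
     (\<forall>Q. fconj S F P Q \<longrightarrow> card (fs_centralizer S Q) \<le> card (fs_centralizer S P))"

definition fully_normalized :: "('a, 'b) monoid_scheme \<Rightarrow> ('a set \<Rightarrow> ('a \<Rightarrow> 'a) \<Rightarrow> bool) \<Rightarrow> 'a set \<Rightarrow> bool" where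
  "fully_normalized S F P \<longleftrightarrow>
     (\<forall>Q. fconj S F P Q \<longrightarrow> card (fs_normalizer S Q) \<le> card (fs_normalizer S P))"

definition autF :: "('a, 'b) monoid_scheme \<Rightarrow> ('a set \<Rightarrow> ('a \<Rightarrow> 'a) \<Rightarrow> bool) \<Rightarrow> 'a set \<Rightarrow> ('a \<Rightarrow> 'a) set" where
  "autF S F P = {restrict \<phi> P | \<phi>. F P \<phi> \<and> \<phi> ` P = P}"

definition autS :: "('a, 'b) monoid_scheme \<Rightarrow> 'a set \<Rightarrow> ('a \<Rightarrow> 'a) set" where
  "autS S P = {restrict (fs_conj S g) P | g. g \<in> fs_normalizer S P}"

definition autS_sylow :: "nat \<Rightarrow> ('a, 'b) monoid_scheme \<Rightarrow> ('a set \<Rightarrow> ('a \<Rightarrow> 'a) \<Rightarrow> bool) \<Rightarrow> 'a set \<Rightarrow> bool" where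
  "autS_sylow p S F P \<longleftrightarrow>
     (\<exists>k m. card (autS S P) = p ^ k \<and> card (autF S F P) = p ^ k * m \<and> \<not> p dvd m)"

text \<open>N_phi = {g in N_S(P) | phi c_g phi^-1 in Aut_S(phi(P))}.\<close>

definition N_phi :: "('a, 'b) monoid_scheme \<Rightarrow> 'a set \<Rightarrow> ('a \<Rightarrow> 'a) \<Rightarrow> 'a set" where
  "N_phi S P \<phi> = {g \<in> fs_normalizer S P. \<exists>h \<in> fs_normalizer S (\<phi> ` P).
       \<forall>x \<in> \<phi> ` P. \<phi> (fs_conj S g (inv_into P \<phi> x)) = fs_conj S h x}"

text \<open>Saturation in the sense of Broto--Levi--Oliver.\<close>

definition saturated_fusion_system ::
  "nat \<Rightarrow> ('a, 'b) monoid_scheme \<Rightarrow> ('a set \<Rightarrow> ('a \<Rightarrow> 'a) \<Rightarrow> bool) \<Rightarrow> bool" where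
  "saturated_fusion_system p S F \<longleftrightarrow>
     fusion_system S F \<and>
     (\<forall>P. subgroup P S \<and> fully_normalized S F P \<longrightarrow>
          fully_centralized S F P \<and> autS_sylow p S F P) \<and>
     (\<forall>P \<phi>. F P \<phi> \<and> fully_centralized S F (\<phi> ` P) \<longrightarrow>
          (\<exists>\<psi>. F (N_phi S P \<phi>) \<psi> \<and> (\<forall>x\<in>P. \<psi> x = \<phi> x)))"

definition biset :: "('a, 'b) monoid_scheme \<Rightarrow> 'c set \<Rightarrow> ('a \<Rightarrow> 'c \<Rightarrow> 'c) \<Rightarrow> ('c \<Rightarrow> 'a \<Rightarrow> 'c) \<Rightarrow> bool" where
  "biset S \<Omega> L R \<longleftrightarrow> finite \<Omega> \<and>
     (\<forall>g\<in>carrier S. \<forall>x\<in>\<Omega>. L g x \<in> \<Omega> \<and> R x g \<in> \<Omega>) \<and>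
     (\<forall>x\<in>\<Omega>. L \<one>\<^bsub>S\<^esub> x = x \<and> R x \<one>\<^bsub>S\<^esub> = x) \<and>
     (\<forall>g\<in>carrier S. \<forall>h\<in>carrier S. \<forall>x\<in>\<Omega>.
        L (g \<otimes>\<^bsub>S\<^esub> h) x = L g (L h x) \<and>
        R x (g \<otimes>\<^bsub>S\<^esub> h) = R (R x g) h \<and>
        L g (R x h) = R (L g x) h)"

definition bact :: "('a, 'b) monoid_scheme \<Rightarrow> ('a \<Rightarrow> 'c \<Rightarrow> 'c) \<Rightarrow> ('c \<Rightarrow> 'a \<Rightarrow> 'c) \<Rightarrow> 'a \<times> 'a \<Rightarrow> 'c \<Rightarrow> 'c" where
  "bact S L R st x = L (fst st) (R x (inv\<^bsub>S\<^esub> (snd st)))"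

text \<open>(F x F)-stability: for every subgroup T of S x S and every morphism of the product
  fusion system F x F defined on T (i.e. a restriction of phi x psi with phi, psi in F),
  the T-sets obtained by restriction along the inclusion and along phi x psi are isomorphic.\<close>

definition biset_stable ::
  "('a, 'b) monoid_scheme \<Rightarrow> ('a set \<Rightarrow> ('a \<Rightarrow> 'a) \<Rightarrow> bool) \<Rightarrow> 'c set \<Rightarrow> ('a \<Rightarrow> 'c \<Rightarrow> 'c) \<Rightarrow> ('c \<Rightarrow> 'a \<Rightarrow> 'c) \<Rightarrow> bool" where
  "biset_stable S F \<Omega> L R \<longleftrightarrow>
     (\<forall>P Q \<phi> \<psi> T. F P \<phi> \<and> F Q \<psi> \<and> subgroup T (S \<times>\<times> S) \<and> T \<subseteq> P \<times> Q \<longrightarrow>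
        (\<exists>f. bij_betw f \<Omega> \<Omega> \<and>
             (\<forall>u v x. (u, v) \<in> T \<and> x \<in> \<Omega> \<longrightarrow>
                 f (bact S L R (u, v) x) = bact S L R (\<phi> u, \<psi> v) (f x))))"

definition biset_generated ::
  "('a, 'b) monoid_scheme \<Rightarrow> ('a set \<Rightarrow> ('a \<Rightarrow> 'a) \<Rightarrow> bool) \<Rightarrow> 'c set \<Rightarrow> ('a \<Rightarrow> 'c \<Rightarrow> 'c) \<Rightarrow> ('c \<Rightarrow> 'a \<Rightarrow> 'c) \<Rightarrow> bool" where
  "biset_generated S F \<Omega> L R \<longleftrightarrow>
     (\<forall>x\<in>\<Omega>. \<exists>P \<phi>. F P \<phi> \<and>
        {st \<in> carrier S \<times> carrier S. bact S L R st x = x} = {(u, \<phi> u) | u. u \<in> P})"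

definition characteristic_biset ::
  "nat \<Rightarrow> ('a, 'b) monoid_scheme \<Rightarrow> ('a set \<Rightarrow> ('a \<Rightarrow> 'a) \<Rightarrow> bool) \<Rightarrow> 'c set \<Rightarrow> ('a \<Rightarrow> 'c \<Rightarrow> 'c) \<Rightarrow> ('c \<Rightarrow> 'a \<Rightarrow> 'c) \<Rightarrow> bool" where
  "characteristic_biset p S F \<Omega> L R \<longleftrightarrow>
     biset S \<Omega> L R \<and> biset_stable S F \<Omega> L R \<and> biset_generated S F \<Omega> L R \<and>
     (\<exists>k. card \<Omega> = k * card (carrier S) \<and> \<not> p dvd k)"

definition biset_orbit_count ::
  "('a, 'b) monoid_scheme \<Rightarrow> 'c set \<Rightarrow> ('a \<Rightarrow> 'c \<Rightarrow> 'c) \<Rightarrow> ('c \<Rightarrow> 'a \<Rightarrow> 'c) \<Rightarrow> 'a set \<Rightarrow> 'a set \<Rightarrow> nat" where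
  "biset_orbit_count S \<Omega> L R P Q =
     card ((\<lambda>x. {bact S L R (u, v) x | u v. u \<in> P \<and> v \<in> Q}) ` \<Omega>)"

end

theory Submission
  imports Defs "Jordan_Normal_Form.DL_Rank_Submatrix" "HOL-Algebra.Group_Action" "HOL-Computational_Algebra.Primes"
begin


context vec_space
begin

lemma rank_le_card_span:
  assumes A: "A \<in> carrier_mat n nc" and B: "B \<subseteq> carrier_vec n" "finite B"
    and cols: "set (cols A) \<subseteq> span B"
  shows "rank A \<le> card B"
proof -
  obtain Sm where Sm: "maximal Sm (\<lambda>T. T \<subseteq> set (cols A) \<and> lin_indpt T)"
    using maximal_exists[of "(\<lambda>T. T \<subseteq> set (cols A) \<and> lin_indpt T)" "card (set (cols A))" "{}"]
    by (meson List.finite_set card_mono empty_iff empty_subsetI finite_lin_indpt2 rev_finite_subset)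
  then have r: "rank A = card Sm" using rank_card_indpt[OF A] by simp
  have Ss: "Sm \<subseteq> set (cols A)" "lin_indpt Sm" using Sm unfolding maximal_def by auto
  have fin: "finite Sm" using Ss(1) List.finite_set rev_finite_subset by metis
  have "Sm \<subseteq> span B" using Ss(1) cols by auto
  from replacement[OF fin B(2) B(1) Ss(2) this]
  have "card Sm \<le> card B" by (elim exE conjE) linarith
  then show ?thesis using r by simp
qed

lemma sum_in_span:
  assumes I: "finite I" and Vf: "Vf ` I \<subseteq> carrier_vec n"
  shows "J \<subseteq> I \<Longrightarrow> vec n (\<lambda>i. \<Sum>c\<in>J. a c * Vf c $ i) \<in> span (Vf ` I)"
proof (induction J rule: infinite_finite_induct)
  case (infinite J)
  have "vec n (\<lambda>i. 0) = 0\<^sub>v n" by (simp add: zero_vec_def)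
  moreover have "0\<^sub>v n \<in> span (Vf ` I)" using submodule.zero_closed[OF span_is_submodule[OF Vf]] by simp
  moreover have False using infinite I rev_finite_subset by metis
  ultimately show ?case by simp
next
  case empty
  have "0\<^sub>v n \<in> span (Vf ` I)" using submodule.zero_closed[OF span_is_submodule[OF Vf]] by simp
  then show ?case unfolding sum.empty zero_vec_def .
next
  case (insert c J)
  have cI: "c \<in> I" using insert by simp
  have Vc: "Vf c \<in> carrier_vec n" using Vf cI by auto
  have 1: "vec n (\<lambda>i. \<Sum>c\<in>J. a c * Vf c $ i) \<in> span (Vf ` I)" using insert by simp
  have inspan: "Vf c \<in> span (Vf ` I)" using in_own_span[OF Vf] cI by auto
  have 2: "a c \<cdot>\<^sub>v Vf c \<in> span (Vf ` I)"
    using submodule.smult_closed[OF span_is_submodule[OF Vf] _ inspan, of "a c"] by simp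
  have "vec n (\<lambda>i. \<Sum>c\<in>insert c J. a c * Vf c $ i) = a c \<cdot>\<^sub>v Vf c + vec n (\<lambda>i. \<Sum>c\<in>J. a c * Vf c $ i)"
    using insert Vc by (auto intro!: eq_vecI)
  moreover have "a c \<cdot>\<^sub>v Vf c + vec n (\<lambda>i. \<Sum>c\<in>J. a c * Vf c $ i) \<in> span (Vf ` I)"
    using submodule.m_closed[OF span_is_submodule[OF Vf] 2 1] by simp
  ultimately show ?case by simp
qed

lemma rank_le_card_comb:
  assumes A: "A \<in> carrier_mat n nc" and I: "finite I" and Vf: "Vf ` I \<subseteq> carrier_vec n"
    and c: "\<And>j. j < nc \<Longrightarrow> \<exists>a. col A j = vec n (\<lambda>i. \<Sum>c\<in>I. a c * Vf c $ i)"
  shows "rank A \<le> card I"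
proof -
  have "set (cols A) \<subseteq> span (Vf ` I)"
  proof
    fix v assume "v \<in> set (cols A)"
    then obtain j where j: "j < nc" "v = col A j" using A by (auto simp: in_set_conv_nth)
    then obtain a where "col A j = vec n (\<lambda>i. \<Sum>c\<in>I. a c * Vf c $ i)" using c by blast
    then show "v \<in> span (Vf ` I)" using j sum_in_span[OF I Vf, of I a] by simp
  qed
  then have "rank A \<le> card (Vf ` I)" using rank_le_card_span[OF A Vf finite_imageI[OF I]] by simp
  also have "\<dots> \<le> card I" using card_image_le[OF I] .
  finally show ?thesis .
qed

end

lemma quad_pos:
  fixes X :: "'x set" and r :: "'x \<Rightarrow> 'x \<Rightarrow> bool" and c W :: "'x \<Rightarrow> rat"
  assumes X: "finite X" and rfl: "\<And>x. x\<in>X \<Longrightarrow> r x x"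
    and sym: "\<And>x y. x\<in>X \<Longrightarrow> y\<in>X \<Longrightarrow> r x y \<Longrightarrow> r y x"
    and trans: "\<And>x y z. x\<in>X \<Longrightarrow> y\<in>X \<Longrightarrow> z\<in>X \<Longrightarrow> r x y \<Longrightarrow> r y z \<Longrightarrow> r x z"
    and cpos: "\<And>x. x\<in>X \<Longrightarrow> c x > 0" and ceq: "\<And>x y. x\<in>X \<Longrightarrow> y\<in>X \<Longrightarrow> r x y \<Longrightarrow> c x = c y"
    and zero: "(\<Sum>x\<in>X. \<Sum>y\<in>X. (if r x y then c x else 0) * W x * W y) = 0"
  shows "x \<in> X \<Longrightarrow> (\<Sum>y\<in>{y\<in>X. r x y}. W y) = 0"
proof -
  define K where "K x = {y\<in>X. r x y}" for x
  define T where "T x = (\<Sum>y\<in>K x. W y)" for x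
  define k :: "'x \<Rightarrow> rat" where "k x = of_nat (card (K x))" for x
  have Kfin: "finite (K x)" for x unfolding K_def using X by simp
  have Kpos: "x \<in> X \<Longrightarrow> card (K x) > 0" for x
    unfolding K_def using X rfl by (auto simp: card_gt_0_iff)
  have Keq: "x \<in> X \<Longrightarrow> y \<in> X \<Longrightarrow> r x y \<Longrightarrow> K x = K y" for x y
    unfolding K_def using sym trans by blast
  have Teq: "x \<in> X \<Longrightarrow> y \<in> X \<Longrightarrow> r x y \<Longrightarrow> T x = T y" for x y
    unfolding T_def using Keq by simp
  have inner: "(\<Sum>y\<in>X. (if r x y then c x else 0) * W x * W y) = c x * W x * T x" for x
  proof -
    have "(\<Sum>y\<in>X. (if r x y then c x else 0) * W x * W y) = (\<Sum>y\<in>X. if r x y then c x * W x * W y else 0)"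
      by (rule sum.cong) auto
    also have "\<dots> = (\<Sum>y\<in>K x. c x * W x * W y)" unfolding K_def by (rule sum.inter_filter[OF X, symmetric])
    also have "\<dots> = c x * W x * T x" unfolding T_def by (simp add: sum_distrib_left)
    finally show ?thesis .
  qed
  have main: "(\<Sum>x\<in>X. c x / k x * T x ^ 2) = (\<Sum>x\<in>X. c x * W x * T x)"
  proof -
    have "(\<Sum>x\<in>X. c x / k x * T x ^ 2) = (\<Sum>x\<in>X. \<Sum>y\<in>X. if r x y then c x / k x * T x * W y else 0)"
    proof (rule sum.cong[OF refl])
      fix x assume x: "x \<in> X"
      have "c x / k x * T x ^ 2 = (c x / k x * T x) * T x" by (simp add: power2_eq_square)
      also have "\<dots> = (\<Sum>y\<in>K x. c x / k x * T x * W y)" by (subst (2) T_def) (simp add: sum_distrib_left)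
      finally have "c x / k x * T x ^ 2 = (\<Sum>y\<in>K x. c x / k x * T x * W y)" .
      also have "\<dots> = (\<Sum>y\<in>X. if r x y then c x / k x * T x * W y else 0)"
        unfolding K_def by (rule sum.inter_filter[OF X])
      finally show "c x / k x * T x ^ 2 = (\<Sum>y\<in>X. if r x y then c x / k x * T x * W y else 0)" .
    qed
    also have "\<dots> = (\<Sum>y\<in>X. \<Sum>x\<in>X. if r x y then c x / k x * T x * W y else 0)"
      by (rule sum.swap)
    also have "\<dots> = (\<Sum>y\<in>X. \<Sum>x\<in>X. if r y x then c y / k y * T y * W y else 0)"
    proof (rule sum.cong[OF refl], rule sum.cong[OF refl])
      fix x y assume y: "y \<in> X" and x: "x \<in> X"
      show "(if r x y then c x / k x * T x * W y else 0) = (if r y x then c y / k y * T y * W y else 0)"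
        using sym[OF x y] sym[OF y x] ceq[OF x y] Keq[OF x y] Teq[OF x y] by (auto simp: k_def)
    qed
    also have "\<dots> = (\<Sum>y\<in>X. c y / k y * T y * W y * k y)"
    proof (rule sum.cong[OF refl])
      fix y assume y: "y \<in> X"
      have "(\<Sum>x\<in>X. if r y x then c y / k y * T y * W y else 0) = (\<Sum>x\<in>K y. c y / k y * T y * W y)"
        unfolding K_def by (rule sum.inter_filter[OF X, symmetric])
      also have "\<dots> = c y / k y * T y * W y * k y" unfolding k_def by simp
      finally show "(\<Sum>x\<in>X. if r y x then c y / k y * T y * W y else 0) = c y / k y * T y * W y * k y" .
    qed
    also have "\<dots> = (\<Sum>y\<in>X. c y * W y * T y)"
    proof (rule sum.cong[OF refl])
      fix y assume y: "y \<in> X"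
      have "k y \<noteq> 0" using Kpos[OF y] unfolding k_def by simp
      then show "c y / k y * T y * W y * k y = c y * W y * T y"
        by (simp add: field_simps)
    qed
    finally show ?thesis .
  qed
  have s0: "(\<Sum>x\<in>X. c x / k x * T x ^ 2) = 0" using main zero inner by simp
  have nn: "\<forall>x\<in>X. 0 \<le> c x / k x * T x ^ 2"
  proof
    fix x assume x: "x \<in> X"
    have "0 \<le> c x" using cpos[OF x] by simp
    then have "0 \<le> c x / k x" unfolding k_def by (simp add: zero_le_divide_iff)
    then show "0 \<le> c x / k x * T x ^ 2" by (rule mult_nonneg_nonneg) simp_all
  qed
  have all0: "\<forall>x\<in>X. c x / k x * T x ^ 2 = 0"
    using sum_nonneg_eq_0_iff[OF X, of "\<lambda>x. c x / k x * T x ^ 2"] nn s0 by simp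
  assume x: "x \<in> X"
  have "c x / k x * T x ^ 2 = 0" using all0 x by simp
  moreover have "c x / k x \<noteq> 0" using cpos[OF x] Kpos[OF x] unfolding k_def by simp
  ultimately have "T x = 0" by simp
  then show "(\<Sum>y\<in>{y\<in>X. r x y}. W y) = 0" unfolding T_def K_def by simp
qed



locale cbs =
  fixes S :: "('a,'b) monoid_scheme" and p :: nat and F :: "'a set \<Rightarrow> ('a \<Rightarrow> 'a) \<Rightarrow> bool"
    and \<Omega> :: "'c set" and L :: "'a \<Rightarrow> 'c \<Rightarrow> 'c" and R :: "'c \<Rightarrow> 'a \<Rightarrow> 'c"
  assumes grp: "group S" and prime: "prime p" and finS: "finite (carrier S)" and ppow: "\<exists>n. card (carrier S) = p^n"
    and fs: "fusion_system S F" and cb: "characteristic_biset p S F \<Omega> L R"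
begin

sublocale G: group S by (rule grp)

lemmas fsp = fs[unfolded fusion_system_def]
lemma fs_basic: "F P \<phi> \<Longrightarrow> subgroup P S \<and> \<phi> \<in> hom (S\<lparr>carrier := P\<rparr>) S \<and> inj_on \<phi> P"
  using fsp[THEN conjunct1] by simp
lemma fs_ext: "F P \<phi> \<Longrightarrow> (\<And>x. x\<in>P \<Longrightarrow> \<psi> x = \<phi> x) \<Longrightarrow> F P \<psi>"
  using fsp[THEN conjunct2, THEN conjunct1] by blast
lemma fs_conjI: "subgroup P S \<Longrightarrow> g \<in> carrier S \<Longrightarrow> F P (fs_conj S g)"
  using fsp[THEN conjunct2, THEN conjunct2, THEN conjunct1] by simp
lemma fs_restr: "F P \<phi> \<Longrightarrow> subgroup Q S \<Longrightarrow> Q \<subseteq> P \<Longrightarrow> F Q \<phi>"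
  using fsp[THEN conjunct2, THEN conjunct2, THEN conjunct2, THEN conjunct1] by simp
lemma fs_comp: "F P \<phi> \<Longrightarrow> F (\<phi> ` P) \<psi> \<Longrightarrow> F P (\<psi> \<circ> \<phi>)"
  using fsp[THEN conjunct2, THEN conjunct2, THEN conjunct2, THEN conjunct2, THEN conjunct1] by simp
lemma fs_inv: "F P \<phi> \<Longrightarrow> F (\<phi> ` P) (inv_into P \<phi>)"
  using fsp[THEN conjunct2, THEN conjunct2, THEN conjunct2, THEN conjunct2, THEN conjunct2] by simp

lemma fs_id: "subgroup P S \<Longrightarrow> F P (\<lambda>x. x)"
proof -
  assume P: "subgroup P S"
  have "F P (fs_conj S \<one>\<^bsub>S\<^esub>)" using fs_conjI[OF P] by simp
  moreover have "\<And>x. x \<in> P \<Longrightarrow> x = fs_conj S \<one>\<^bsub>S\<^esub> x"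
    using P subgroup.mem_carrier[OF P] by (simp add: fs_conj_def)
  ultimately show ?thesis using fs_ext[of P "fs_conj S \<one>\<^bsub>S\<^esub>" "\<lambda>x. x"] by blast
qed

lemma fs_group_hom: "F P \<phi> \<Longrightarrow> group_hom (S\<lparr>carrier := P\<rparr>) S \<phi>"
  unfolding group_hom_def group_hom_axioms_def
  using fs_basic[of P \<phi>] subgroup.subgroup_is_group[of P S] G.is_group by blast

lemma fs_img_sub: "F P \<phi> \<Longrightarrow> subgroup (\<phi> ` P) S"
proof -
  assume a: "F P \<phi>"
  then interpret h: group_hom "S\<lparr>carrier := P\<rparr>" S \<phi> by (rule fs_group_hom)
  have "subgroup (carrier (S\<lparr>carrier := P\<rparr>)) (S\<lparr>carrier := P\<rparr>)"
    using h.G.subgroup_self .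
  then show ?thesis using h.subgroup_img_is_subgroup by fastforce
qed

lemma fs_mem: "F P \<phi> \<Longrightarrow> x \<in> P \<Longrightarrow> \<phi> x \<in> carrier S"
  using fs_basic[of P \<phi>] by (auto simp: hom_def Pi_def)

definition cyc :: "'a \<Rightarrow> 'a set" where "cyc x = range (\<lambda>n::int. x [^]\<^bsub>S\<^esub> n)"

lemma cyc_gen: assumes "x \<in> carrier S" shows "cyc x = generate S {x}"
proof -
  have "generate S {x} = {x [^]\<^bsub>S\<^esub> (k::int) | k. k \<in> UNIV}" by (rule G.generate_pow[OF assms])
  then show ?thesis unfolding cyc_def by blast
qed

lemma cyc_sub: "x \<in> carrier S \<Longrightarrow> subgroup (cyc x) S"
  by (simp add: cyc_gen G.generate_is_subgroup)

lemma cyc_self: "x \<in> carrier S \<Longrightarrow> x \<in> cyc x"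
  unfolding cyc_def by (rule range_eqI[where x="1::int"]) simp

lemma cyc_min: "subgroup H S \<Longrightarrow> x \<in> H \<Longrightarrow> cyc x \<subseteq> H"
proof -
  assume a: "subgroup H S" "x \<in> H"
  then have "x \<in> carrier S" by (rule subgroup.mem_carrier)
  then have "cyc x = generate S {x}" by (rule cyc_gen)
  also have "\<dots> \<subseteq> H" using G.generate_subgroup_incl[of "{x}" H] a by simp
  finally show ?thesis .
qed

lemma cyc_img: assumes "F P \<phi>" "x \<in> P" shows "\<phi> ` cyc x = cyc (\<phi> x)"
proof -
  interpret h: group_hom "S\<lparr>carrier := P\<rparr>" S \<phi> by (rule fs_group_hom[OF assms(1)])
  have P: "subgroup P S" using fs_basic assms by blast
  have x: "x \<in> carrier S" using P assms(2) by (rule subgroup.mem_carrier)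
  have 1: "generate S (\<phi> ` {x}) = \<phi> ` generate (S\<lparr>carrier := P\<rparr>) {x}"
    by (rule h.generate_img) (simp add: assms(2))
  have 2: "generate (S\<lparr>carrier := P\<rparr>) {x} = generate S {x}"
    using G.generate_consistent[of "{x}" P] assms(2) P by simp
  have "\<phi> ` cyc x = \<phi> ` generate S {x}" using cyc_gen[OF x] by simp
  also have "\<dots> = generate S {\<phi> x}" using 1 2 by simp
  also have "\<dots> = cyc (\<phi> x)" using cyc_gen[OF fs_mem[OF assms]] by simp
  finally show ?thesis .
qed

lemma cyclic_iff: assumes "subgroup P S"
  shows "cyclic_group (S\<lparr>carrier := P\<rparr>) \<longleftrightarrow> (\<exists>x\<in>P. P = cyc x)"
proof -
  interpret H: group "S\<lparr>carrier := P\<rparr>" using subgroup.subgroup_is_group[OF assms G.is_group] .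
  have eq: "range (\<lambda>n::int. x [^]\<^bsub>S\<lparr>carrier := P\<rparr>\<^esub> n) = cyc x" if "x \<in> P" for x
    unfolding cyc_def using G.int_pow_consistent[OF assms that] by simp
  have "cyclic_group (S\<lparr>carrier := P\<rparr>) \<longleftrightarrow> (\<exists>x\<in>P. P = range (\<lambda>n::int. x [^]\<^bsub>S\<lparr>carrier := P\<rparr>\<^esub> n))"
    unfolding H.cyclic_group by simp
  also have "\<dots> \<longleftrightarrow> (\<exists>x\<in>P. P = cyc x)"
  proof
    assume "\<exists>x\<in>P. P = range (\<lambda>n::int. x [^]\<^bsub>S\<lparr>carrier := P\<rparr>\<^esub> n)"
    then obtain x where "x \<in> P" "P = range (\<lambda>n::int. x [^]\<^bsub>S\<lparr>carrier := P\<rparr>\<^esub> n)" by (elim bexE)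
    then show "\<exists>x\<in>P. P = cyc x" using eq by (intro bexI[of _ x]) simp_all
  next
    assume "\<exists>x\<in>P. P = cyc x"
    then obtain x where "x \<in> P" "P = cyc x" by (elim bexE)
    then show "\<exists>x\<in>P. P = range (\<lambda>n::int. x [^]\<^bsub>S\<lparr>carrier := P\<rparr>\<^esub> n)" using eq by (intro bexI[of _ x]) simp_all
  qed
  finally show ?thesis .
qed

lemma cb_parts: "biset S \<Omega> L R" "biset_stable S F \<Omega> L R" "biset_generated S F \<Omega> L R"
  "\<exists>k. card \<Omega> = k * card (carrier S) \<and> \<not> p dvd k"
  using cb unfolding characteristic_biset_def by auto

lemma bis: "finite \<Omega>"
  "\<And>g x. g\<in>carrier S \<Longrightarrow> x\<in>\<Omega> \<Longrightarrow> L g x \<in> \<Omega>"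
  "\<And>g x. g\<in>carrier S \<Longrightarrow> x\<in>\<Omega> \<Longrightarrow> R x g \<in> \<Omega>"
  "\<And>x. x\<in>\<Omega> \<Longrightarrow> L \<one>\<^bsub>S\<^esub> x = x" "\<And>x. x\<in>\<Omega> \<Longrightarrow> R x \<one>\<^bsub>S\<^esub> = x"
  "\<And>g h x. g\<in>carrier S \<Longrightarrow> h\<in>carrier S \<Longrightarrow> x\<in>\<Omega> \<Longrightarrow> L (g \<otimes>\<^bsub>S\<^esub> h) x = L g (L h x)"
  "\<And>g h x. g\<in>carrier S \<Longrightarrow> h\<in>carrier S \<Longrightarrow> x\<in>\<Omega> \<Longrightarrow> R x (g \<otimes>\<^bsub>S\<^esub> h) = R (R x g) h"
  "\<And>g h x. g\<in>carrier S \<Longrightarrow> h\<in>carrier S \<Longrightarrow> x\<in>\<Omega> \<Longrightarrow> L g (R x h) = R (L g x) h"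
  using cb_parts(1) unfolding biset_def by auto

abbreviation act where "act \<equiv> bact S L R"

lemma act_closed: "fst g \<in> carrier S \<Longrightarrow> snd g \<in> carrier S \<Longrightarrow> x \<in> \<Omega> \<Longrightarrow> act g x \<in> \<Omega>"
  unfolding bact_def using bis by auto

lemma act_one: "x \<in> \<Omega> \<Longrightarrow> act (\<one>\<^bsub>S\<^esub>, \<one>\<^bsub>S\<^esub>) x = x"
  unfolding bact_def using bis by auto

lemma act_mult:
  assumes "s \<in> carrier S" "t \<in> carrier S" "s' \<in> carrier S" "t' \<in> carrier S" "x \<in> \<Omega>"
  shows "act (s \<otimes>\<^bsub>S\<^esub> s', t \<otimes>\<^bsub>S\<^esub> t') x = act (s, t) (act (s', t') x)"
proof -
  have i: "inv\<^bsub>S\<^esub> t \<in> carrier S" "inv\<^bsub>S\<^esub> t' \<in> carrier S" using assms by auto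
  have "act (s \<otimes>\<^bsub>S\<^esub> s', t \<otimes>\<^bsub>S\<^esub> t') x = L (s \<otimes>\<^bsub>S\<^esub> s') (R x (inv\<^bsub>S\<^esub> t' \<otimes>\<^bsub>S\<^esub> inv\<^bsub>S\<^esub> t))"
    unfolding bact_def using assms by (simp add: G.inv_mult_group)
  also have "\<dots> = L s (L s' (R (R x (inv\<^bsub>S\<^esub> t')) (inv\<^bsub>S\<^esub> t)))"
    using assms i bis by simp
  also have "\<dots> = L s (R (L s' (R x (inv\<^bsub>S\<^esub> t'))) (inv\<^bsub>S\<^esub> t))"
    using assms i bis by simp
  finally show ?thesis unfolding bact_def by simp
qed

definition actf where "actf g = (\<lambda>x\<in>\<Omega>. act g x)"

lemma act_inv:
  assumes "s \<in> carrier S" "t \<in> carrier S" "x \<in> \<Omega>"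
  shows "act (inv\<^bsub>S\<^esub> s, inv\<^bsub>S\<^esub> t) (act (s,t) x) = x"
  using act_mult[of "inv\<^bsub>S\<^esub> s" "inv\<^bsub>S\<^esub> t" s t x] assms act_one by simp

lemma actf_bij: assumes "s \<in> carrier S" "t \<in> carrier S" shows "actf (s,t) \<in> Bij \<Omega>"
proof -
  have "bij_betw (act (s,t)) \<Omega> \<Omega>"
  proof (rule bij_betw_byWitness[where f'="act (inv\<^bsub>S\<^esub> s, inv\<^bsub>S\<^esub> t)"])
    show "\<forall>a\<in>\<Omega>. act (inv\<^bsub>S\<^esub> s, inv\<^bsub>S\<^esub> t) (act (s,t) a) = a" using act_inv[of s t] assms by simp
    show "\<forall>a\<in>\<Omega>. act (s,t) (act (inv\<^bsub>S\<^esub> s, inv\<^bsub>S\<^esub> t) a) = a"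
      using act_inv[of "inv\<^bsub>S\<^esub> s" "inv\<^bsub>S\<^esub> t"] assms by simp
    show "act (s,t) ` \<Omega> \<subseteq> \<Omega>" using act_closed[of "(s,t)"] assms by auto
    show "act (inv\<^bsub>S\<^esub> s, inv\<^bsub>S\<^esub> t) ` \<Omega> \<subseteq> \<Omega>" using act_closed[of "(inv\<^bsub>S\<^esub> s, inv\<^bsub>S\<^esub> t)"] assms by auto
  qed
  moreover have "bij_betw (actf (s,t)) \<Omega> \<Omega> = bij_betw (act (s,t)) \<Omega> \<Omega>"
    by (rule bij_betw_cong) (simp add: actf_def)
  ultimately have "bij_betw (actf (s,t)) \<Omega> \<Omega>" by simp
  moreover have "actf (s,t) \<in> extensional \<Omega>" unfolding actf_def by simp
  ultimately show ?thesis unfolding Bij_def by simp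
qed

lemma actf_comp:
  assumes "s \<in> carrier S" "t \<in> carrier S" "s' \<in> carrier S" "t' \<in> carrier S"
  shows "actf (s \<otimes>\<^bsub>S\<^esub> s', t \<otimes>\<^bsub>S\<^esub> t') = compose \<Omega> (actf (s,t)) (actf (s',t'))"
proof (rule ext)
  fix x show "actf (s \<otimes>\<^bsub>S\<^esub> s', t \<otimes>\<^bsub>S\<^esub> t') x = compose \<Omega> (actf (s,t)) (actf (s',t')) x"
  proof (cases "x \<in> \<Omega>")
    case True
    then show ?thesis unfolding actf_def compose_def using act_mult[OF assms True] act_closed[of "(s',t')" x] assms(3,4) by simp
  next
    case False
    then show ?thesis unfolding actf_def compose_def by simp
  qed
qed

lemma act_group_action:
  assumes "subgroup T (S \<times>\<times> S)"
  shows "group_action ((S \<times>\<times> S)\<lparr>carrier := T\<rparr>) \<Omega> actf"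
proof -
  have PG: "group (S \<times>\<times> S)" using DirProd_group[OF G.is_group G.is_group] .
  have TG: "group ((S \<times>\<times> S)\<lparr>carrier := T\<rparr>)" using subgroup.subgroup_is_group[OF assms PG] .
  have Tc: "\<And>g. g \<in> T \<Longrightarrow> g \<in> carrier S \<times> carrier S"
    using subgroup.subset[OF assms] by auto
  have hom: "actf \<in> hom ((S \<times>\<times> S)\<lparr>carrier := T\<rparr>) (BijGroup \<Omega>)"
  proof (rule homI)
    fix g assume "g \<in> carrier ((S \<times>\<times> S)\<lparr>carrier := T\<rparr>)"
    then have "g \<in> carrier S \<times> carrier S" using Tc by simp
    then show "actf g \<in> carrier (BijGroup \<Omega>)" using actf_bij unfolding BijGroup_def by (cases g) simp
  next
    fix g h assume gh: "g \<in> carrier ((S \<times>\<times> S)\<lparr>carrier := T\<rparr>)" "h \<in> carrier ((S \<times>\<times> S)\<lparr>carrier := T\<rparr>)"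
    then have gh': "g \<in> carrier S \<times> carrier S" "h \<in> carrier S \<times> carrier S" using Tc by simp_all
    obtain s t where g: "g = (s,t)" "s \<in> carrier S" "t \<in> carrier S" using gh'(1) by (cases g) simp
    obtain s' t' where h: "h = (s',t')" "s' \<in> carrier S" "t' \<in> carrier S" using gh'(2) by (cases h) simp
    have "actf (g \<otimes>\<^bsub>(S \<times>\<times> S)\<lparr>carrier := T\<rparr>\<^esub> h) = compose \<Omega> (actf g) (actf h)"
      using actf_comp[of s t s' t'] g h by simp
    moreover have "actf g \<in> Bij \<Omega>" "actf h \<in> Bij \<Omega>" using actf_bij g h by simp_all
    ultimately show "actf (g \<otimes>\<^bsub>(S \<times>\<times> S)\<lparr>carrier := T\<rparr>\<^esub> h) = actf g \<otimes>\<^bsub>BijGroup \<Omega>\<^esub> actf h"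
      unfolding BijGroup_def by simp
  qed
  show ?thesis unfolding group_action_def group_hom_def group_hom_axioms_def
    using TG group_BijGroup hom by simp
qed

definition N where "N x y = card {w\<in>\<Omega>. act (x,y) w = w}"

definition orbc where "orbc P Q = biset_orbit_count S \<Omega> L R P Q"

lemma burnside_biset:
  assumes P: "subgroup P S" and Q: "subgroup Q S"
  shows "orbc P Q * (card P * card Q) = (\<Sum>u\<in>P. \<Sum>v\<in>Q. N u v)"
proof -
  have T: "subgroup (P \<times> Q) (S \<times>\<times> S)" using DirProd_subgroups[OF G.is_group P G.is_group Q] .
  interpret A: group_action "(S \<times>\<times> S)\<lparr>carrier := P \<times> Q\<rparr>" \<Omega> actf by (rule act_group_action[OF T])
  have finPQ: "finite P" "finite Q" using P Q finS subgroup.subset rev_finite_subset by metis+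
  have "card (orbits ((S \<times>\<times> S)\<lparr>carrier := P \<times> Q\<rparr>) \<Omega> actf) * Coset.order ((S \<times>\<times> S)\<lparr>carrier := P \<times> Q\<rparr>)
     = (\<Sum>g\<in>carrier ((S \<times>\<times> S)\<lparr>carrier := P \<times> Q\<rparr>). card (invariants \<Omega> actf g))"
    using A.burnside finPQ bis(1) by simp
  moreover have "orbits ((S \<times>\<times> S)\<lparr>carrier := P \<times> Q\<rparr>) \<Omega> actf
      = (\<lambda>x. {act (u, v) x | u v. u \<in> P \<and> v \<in> Q}) ` \<Omega>"
    unfolding orbits_def orbit_def actf_def by auto
  moreover have "Coset.order ((S \<times>\<times> S)\<lparr>carrier := P \<times> Q\<rparr>) = card P * card Q"
    by (simp add: Coset.order_def card_cartesian_product)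
  moreover have "(\<Sum>g\<in>carrier ((S \<times>\<times> S)\<lparr>carrier := P \<times> Q\<rparr>). card (invariants \<Omega> actf g))
      = (\<Sum>g\<in>P \<times> Q. N (fst g) (snd g))"
    unfolding invariants_def N_def actf_def by (auto intro!: sum.cong arg_cong[where f=card])
  moreover have "(\<Sum>g\<in>P \<times> Q. N (fst g) (snd g)) = (\<Sum>u\<in>P. \<Sum>v\<in>Q. N u v)"
    by (simp add: sum.cartesian_product case_prod_beta)
  ultimately show ?thesis unfolding orbc_def biset_orbit_count_def by simp
qed


lemma gen_stab: "w \<in> \<Omega> \<Longrightarrow> \<exists>P \<phi>. F P \<phi> \<and>
        {st \<in> carrier S \<times> carrier S. act st w = w} = {(u, \<phi> u) | u. u \<in> P}"
  using cb_parts(3) unfolding biset_generated_def by blast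

lemma graph_unique:
  assumes "w \<in> \<Omega>" "x \<in> carrier S" "y \<in> carrier S" "y' \<in> carrier S"
    "act (x,y) w = w" "act (x,y') w = w"
  shows "y = y'"
proof -
  obtain P \<phi> where "{st \<in> carrier S \<times> carrier S. act st w = w} = {(u, \<phi> u) | u. u \<in> P}"
    using gen_stab[OF assms(1)] by blast
  then have "(x,y) \<in> {(u, \<phi> u) | u. u \<in> P}" "(x,y') \<in> {(u, \<phi> u) | u. u \<in> P}"
    using assms by blast+
  then show ?thesis by auto
qed

definition fus where "fus x y \<longleftrightarrow> (\<exists>P \<phi>. F P \<phi> \<and> x \<in> P \<and> \<phi> x = y)"

lemma fix_fus:
  assumes "w \<in> \<Omega>" "x \<in> carrier S" "y \<in> carrier S" "act (x,y) w = w"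
  shows "fus x y"
proof -
  obtain P \<phi> where P: "F P \<phi>" "{st \<in> carrier S \<times> carrier S. act st w = w} = {(u, \<phi> u) | u. u \<in> P}"
    using gen_stab[OF assms(1)] by blast
  then have "(x,y) \<in> {(u, \<phi> u) | u. u \<in> P}" using assms by blast
  then show ?thesis unfolding fus_def using P by auto
qed

lemma finN: "finite {w\<in>\<Omega>. act (x,y) w = w}" using bis(1) by simp

lemma N_pos_fus: assumes "x \<in> carrier S" "y \<in> carrier S" "N x y \<noteq> 0" shows "fus x y"
proof -
  have "{w\<in>\<Omega>. act (x,y) w = w} \<noteq> {}" using assms(3) unfolding N_def by (metis card.empty)
  then obtain w where "w \<in> \<Omega>" "act (x,y) w = w" by auto
  then show ?thesis using fix_fus assms by simp
qed

lemma transport: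
  assumes "F P \<phi>" "F Q \<psi>"
  shows "\<exists>f. bij_betw f \<Omega> \<Omega> \<and> (\<forall>u\<in>P. \<forall>v\<in>Q. \<forall>x\<in>\<Omega>. act (u,v) x = x \<longrightarrow> act (\<phi> u, \<psi> v) (f x) = f x)"
proof -
  have P: "subgroup P S" and Q: "subgroup Q S" using fs_basic assms by blast+
  have T: "subgroup (P \<times> Q) (S \<times>\<times> S)" using DirProd_subgroups[OF G.is_group P G.is_group Q] .
  obtain f where f: "bij_betw f \<Omega> \<Omega>" "\<forall>u v x. (u, v) \<in> P \<times> Q \<and> x \<in> \<Omega> \<longrightarrow>
                 f (act (u, v) x) = act (\<phi> u, \<psi> v) (f x)"
    using cb_parts(2) assms T unfolding biset_stable_def by blast
  show ?thesis
    apply (rule exI[of _ f]) using f by force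
qed

lemma N_transport:
  assumes "F P \<phi>" "F Q \<psi>" "u \<in> P" "v \<in> Q"
  shows "N u v \<le> N (\<phi> u) (\<psi> v)"
proof -
  obtain f where f: "bij_betw f \<Omega> \<Omega>" "\<forall>u\<in>P. \<forall>v\<in>Q. \<forall>x\<in>\<Omega>. act (u,v) x = x \<longrightarrow> act (\<phi> u, \<psi> v) (f x) = f x"
    using transport[OF assms(1,2)] by blast
  have "inj_on f {w\<in>\<Omega>. act (u,v) w = w}" using f(1) unfolding bij_betw_def by (auto intro: inj_on_subset)
  moreover have "f ` {w\<in>\<Omega>. act (u,v) w = w} \<subseteq> {w\<in>\<Omega>. act (\<phi> u, \<psi> v) w = w}"
    using f assms(3,4) bij_betwE by fastforce
  ultimately show ?thesis unfolding N_def using card_inj_on_le finN by blast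
qed

lemma fus_carrier: "fus x y \<Longrightarrow> x \<in> carrier S \<and> y \<in> carrier S"
  unfolding fus_def using fs_mem fs_basic subgroup.mem_carrier by metis

lemma F_full: "F (carrier S) (\<lambda>x. x)" using fs_id G.subgroup_self by blast

lemma fus_N:
  assumes "fus x y" shows "N x y = N x x" "N y y = N x y"
proof -
  obtain P \<phi> where P: "F P \<phi>" "x \<in> P" "\<phi> x = y" using assms unfolding fus_def by blast
  have xy: "x \<in> carrier S" "y \<in> carrier S" using fus_carrier assms by auto
  have Fi: "F (\<phi> ` P) (inv_into P \<phi>)" using fs_inv P by blast
  have inj: "inj_on \<phi> P" using fs_basic P by blast
  have yi: "y \<in> \<phi> ` P" "inv_into P \<phi> y = x" using P inj by (auto simp: inv_into_f_f)
  have 1: "N x x \<le> N x y" using N_transport[OF F_full P(1) xy(1) P(2)] P by simp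
  have 2: "N x y \<le> N x x" using N_transport[OF F_full Fi xy(1) yi(1)] yi by simp
  have 3: "N x y \<le> N y y" using N_transport[OF P(1) F_full P(2) xy(2)] P by simp
  have 4: "N y y \<le> N x y" using N_transport[OF Fi F_full yi(1) xy(2)] yi by simp
  show "N x y = N x x" "N y y = N x y" using 1 2 3 4 by auto
qed

lemma fus_refl: "x \<in> carrier S \<Longrightarrow> fus x x"
  unfolding fus_def using F_full by blast

lemma fus_sym: "fus x y \<Longrightarrow> fus y x"
proof -
  assume "fus x y"
  then obtain P \<phi> where P: "F P \<phi>" "x \<in> P" "\<phi> x = y" unfolding fus_def by blast
  have Fi: "F (\<phi> ` P) (inv_into P \<phi>)" using fs_inv P by blast
  have inj: "inj_on \<phi> P" using fs_basic P by blast
  have yi: "y \<in> \<phi> ` P" "inv_into P \<phi> y = x" using P inj by (auto simp: inv_into_f_f)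
  then show "fus y x" unfolding fus_def using Fi by blast
qed

lemma fus_cyc: "F P \<phi> \<Longrightarrow> x \<in> P \<Longrightarrow> F (cyc x) \<phi>"
  using fs_restr cyc_sub cyc_min fs_basic subgroup.mem_carrier by metis

lemma fus_trans: "fus x y \<Longrightarrow> fus y z \<Longrightarrow> fus x z"
proof -
  assume "fus x y" "fus y z"
  then obtain P \<phi> Q \<psi> where P: "F P \<phi>" "x \<in> P" "\<phi> x = y" and Q: "F Q \<psi>" "y \<in> Q" "\<psi> y = z"
    unfolding fus_def by blast
  have x: "x \<in> carrier S" using fus_carrier \<open>fus x y\<close> by blast
  have 1: "F (cyc x) \<phi>" using fus_cyc P by blast
  have 2: "\<phi> ` cyc x = cyc y" using cyc_img P by blast
  have 3: "F (\<phi> ` cyc x) \<psi>" using fus_cyc Q 2 by simp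
  have "F (cyc x) (\<psi> \<circ> \<phi>)" using fs_comp 1 3 by blast
  then show ?thesis unfolding fus_def
    apply (intro exI[of _ "cyc x"] exI[of _ "\<psi> \<circ> \<phi>"])
    using cyc_self x P Q by simp
qed


lemma card_S_pos: "card (carrier S) > 0"
  using finS G.one_closed by (auto simp: card_gt_0_iff)

lemma exists_fix:
  assumes x: "x \<in> carrier S"
  shows "\<exists>w\<in>\<Omega>. \<exists>y\<in>carrier S. act (x,y) w = w"
proof (rule ccontr)
  assume nf: "\<not> ?thesis"
  define C where "C = cyc x"
  have C: "subgroup C S" using cyc_sub x C_def by simp
  have grpC: "group (S\<lparr>carrier := C\<rparr>)" using subgroup.subgroup_is_group[OF C G.is_group] .
  have T: "subgroup (C \<times> carrier S) (S \<times>\<times> S)"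
    using DirProd_subgroups[OF G.is_group C G.is_group G.subgroup_self] .
  interpret A: group_action "(S \<times>\<times> S)\<lparr>carrier := C \<times> carrier S\<rparr>" \<Omega> actf by (rule act_group_action[OF T])
  obtain n where n: "card (carrier S) = p ^ n" using ppow by blast
  have p1: "1 < p" using prime by (rule prime_gt_1_nat)
  have finC: "finite C" using C finS subgroup.subset rev_finite_subset by metis
  have "card C dvd card (carrier S)"
    using G.lagrange[OF C] unfolding Coset.order_def by (metis dvd_triv_right)
  then obtain m where m: "card C = p ^ m" using divides_primepow_nat[OF prime, of "card C" n] n by auto
  have Cc: "\<And>u. u \<in> C \<Longrightarrow> u \<in> carrier S" using C subgroup.mem_carrier by metis
  have xC: "x \<in> C" unfolding C_def using cyc_self x by simp
  have orb: "p * card (carrier S) dvd card (orbit ((S \<times>\<times> S)\<lparr>carrier := C \<times> carrier S\<rparr>) actf w)"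
    if w: "w \<in> \<Omega>" for w
  proof -
    define H where "H = {u \<in> C. \<exists>v\<in>carrier S. act (u,v) w = w}"
    define St where "St = stabilizer ((S \<times>\<times> S)\<lparr>carrier := C \<times> carrier S\<rparr>) actf w"
    have St: "St = {g \<in> C \<times> carrier S. act g w = w}"
      unfolding St_def stabilizer_def actf_def using w by simp
    have HS: "subgroup H S"
    proof (rule G.subgroupI)
      show "H \<subseteq> carrier S" unfolding H_def using Cc by auto
      have "\<one>\<^bsub>S\<^esub> \<in> H" unfolding H_def using act_one[OF w] subgroup.one_closed[OF C] by auto
      then show "H \<noteq> {}" by auto
    next
      fix a assume "a \<in> H"
      then obtain v where a: "a \<in> C" "v \<in> carrier S" "act (a,v) w = w" unfolding H_def by auto
      have "act (inv\<^bsub>S\<^esub> a, inv\<^bsub>S\<^esub> v) w = w" using act_inv[of a v w] a w Cc by simp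
      moreover have "inv\<^bsub>S\<^esub> a \<in> C" "inv\<^bsub>S\<^esub> v \<in> carrier S" using subgroup.m_inv_closed[OF C] a by auto
      ultimately show "inv\<^bsub>S\<^esub> a \<in> H" unfolding H_def by auto
    next
      fix a b assume "a \<in> H" "b \<in> H"
      then obtain v v' where a: "a \<in> C" "v \<in> carrier S" "act (a,v) w = w"
        and b: "b \<in> C" "v' \<in> carrier S" "act (b,v') w = w" unfolding H_def by auto
      have "act (a \<otimes>\<^bsub>S\<^esub> b, v \<otimes>\<^bsub>S\<^esub> v') w = w" using act_mult[of a v b v' w] a b w Cc by simp
      moreover have "a \<otimes>\<^bsub>S\<^esub> b \<in> C" "v \<otimes>\<^bsub>S\<^esub> v' \<in> carrier S" using subgroup.m_closed[OF C] a b by auto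
      ultimately show "a \<otimes>\<^bsub>S\<^esub> b \<in> H" unfolding H_def by auto
    qed
    have HC: "H \<subseteq> C" unfolding H_def by auto
    have xH: "x \<notin> H" unfolding H_def using nf w by auto
    have inj: "inj_on fst St"
    proof (rule inj_onI)
      fix a b assume ab: "a \<in> St" "b \<in> St" "fst a = fst b"
      then show "a = b" unfolding St using graph_unique[OF w, of "fst a" "snd a" "snd b"] Cc
        by (cases a, cases b) auto
    qed
    have img: "fst ` St = H" unfolding St H_def by (auto simp: image_def)
    have cardSt: "card St = card H" using card_image[OF inj] img by simp
    have "subgroup H (S\<lparr>carrier := C\<rparr>)" using G.subgroup_incl[OF HS C HC] .
    from group.lagrange[OF grpC this]
    have "card C = card (rcosets\<^bsub>S\<lparr>carrier := C\<rparr>\<^esub> H) * card H" by (simp add: Coset.order_def)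
    then have "card H dvd card C" by (metis dvd_triv_right)
    then obtain j where j: "card H = p ^ j" using m divides_primepow_nat[OF prime, of "card H" m] by auto
    have "H \<noteq> C" using xH xC by auto
    then have "card H < card C" using psubset_card_mono[OF finC] HC by auto
    then have jm: "j < m" using j m p1 by simp
    have pm: "p ^ m = p ^ (m - j) * p ^ j" using jm by (simp add: power_add[symmetric])
    have os: "card (orbit ((S \<times>\<times> S)\<lparr>carrier := C \<times> carrier S\<rparr>) actf w) * card St = card C * card (carrier S)"
      using A.orbit_stabilizer_theorem[OF w] unfolding St_def by (simp add: Coset.order_def card_cartesian_product)
    then have "card (orbit ((S \<times>\<times> S)\<lparr>carrier := C \<times> carrier S\<rparr>) actf w) * p ^ j = (p ^ (m - j) * card (carrier S)) * p ^ j"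
      using cardSt j m pm by (simp add: ac_simps)
    then have "card (orbit ((S \<times>\<times> S)\<lparr>carrier := C \<times> carrier S\<rparr>) actf w) = p ^ (m - j) * card (carrier S)"
      using p1 by simp
    moreover have "p dvd p ^ (m - j)" using jm by simp
    ultimately show ?thesis by simp
  qed
  have e1: "(\<Sum>orb\<in>orbits ((S \<times>\<times> S)\<lparr>carrier := C \<times> carrier S\<rparr>) \<Omega> actf. \<Sum>x\<in>orb. (1::nat)) = (\<Sum>x\<in>\<Omega>. 1)"
    by (rule A.disjoint_sum[OF bis(1)])
  have "card \<Omega> = (\<Sum>orb\<in>orbits ((S \<times>\<times> S)\<lparr>carrier := C \<times> carrier S\<rparr>) \<Omega> actf. card orb)"
    using e1 by simp
  also have "p * card (carrier S) dvd \<dots>"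
  proof (rule dvd_sum)
    fix orb assume "orb \<in> orbits ((S \<times>\<times> S)\<lparr>carrier := C \<times> carrier S\<rparr>) \<Omega> actf"
    then obtain w where "w \<in> \<Omega>" "orb = orbit ((S \<times>\<times> S)\<lparr>carrier := C \<times> carrier S\<rparr>) actf w"
      unfolding orbits_def by auto
    then show "p * card (carrier S) dvd card orb" using orb by simp
  qed
  finally have d: "p * card (carrier S) dvd card \<Omega>" .
  obtain k where k: "card \<Omega> = k * card (carrier S)" "\<not> p dvd k" using cb_parts(4) by blast
  have "card (carrier S) * p dvd card (carrier S) * k" using d k by (simp add: ac_simps)
  then have "p dvd k" using card_S_pos by (rule dvd_mult_cancel)
  then show False using k by simp
qed

lemma N_diag_pos: assumes "x \<in> carrier S" shows "N x x > 0"
proof -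
  obtain w y where w: "w \<in> \<Omega>" "y \<in> carrier S" "act (x,y) w = w" using exists_fix assms by blast
  have "N x y > 0" unfolding N_def using w finN by (auto simp: card_gt_0_iff)
  moreover have "fus x y" using fix_fus w assms by simp
  ultimately show ?thesis using fus_N(1) by simp
qed


definition gset where "gset Q x = {w\<in>\<Omega>. \<exists>y\<in>Q. act (x,y) w = w}"

lemma subQ: "subgroup Q S \<Longrightarrow> y \<in> Q \<Longrightarrow> y \<in> carrier S"
  by (rule subgroup.mem_carrier)

lemma g_sum:
  assumes Q: "subgroup Q S" and x: "x \<in> carrier S"
  shows "(\<Sum>y\<in>Q. N x y) = card (gset Q x)"
proof -
  have finQ: "finite Q" using Q finS subgroup.subset rev_finite_subset by metis
  have eq: "gset Q x = (\<Union>y\<in>Q. {w\<in>\<Omega>. act (x,y) w = w})" unfolding gset_def by auto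
  have "card (\<Union>y\<in>Q. {w\<in>\<Omega>. act (x,y) w = w}) = (\<Sum>y\<in>Q. card {w\<in>\<Omega>. act (x,y) w = w})"
  proof (rule card_UN_disjoint[OF finQ])
    show "\<forall>i\<in>Q. finite {w \<in> \<Omega>. act (x, i) w = w}" using finN by simp
    show "\<forall>i\<in>Q. \<forall>j\<in>Q. i \<noteq> j \<longrightarrow> {w \<in> \<Omega>. act (x, i) w = w} \<inter> {w \<in> \<Omega>. act (x, j) w = w} = {}"
    proof (intro ballI impI)
      fix i j assume ij: "i \<in> Q" "j \<in> Q" "i \<noteq> j"
      show "{w \<in> \<Omega>. act (x, i) w = w} \<inter> {w \<in> \<Omega>. act (x, j) w = w} = {}"
      proof (rule ccontr)
        assume "{w \<in> \<Omega>. act (x, i) w = w} \<inter> {w \<in> \<Omega>. act (x, j) w = w} \<noteq> {}"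
        then obtain w where w: "w \<in> \<Omega>" "act (x, i) w = w" "act (x, j) w = w" by auto
        have "i = j" using graph_unique[OF w(1) x subQ[OF Q ij(1)] subQ[OF Q ij(2)] w(2,3)] .
        then show False using ij by simp
      qed
    qed
  qed
  then show ?thesis using eq unfolding N_def by simp
qed

lemma proj_sub:
  assumes Q: "subgroup Q S" and w: "w \<in> \<Omega>"
  shows "subgroup {u\<in>carrier S. \<exists>y\<in>Q. act (u,y) w = w} S"
proof (rule G.subgroupI)
  show "{u\<in>carrier S. \<exists>y\<in>Q. act (u,y) w = w} \<subseteq> carrier S" by auto
  have "\<one>\<^bsub>S\<^esub> \<in> {u\<in>carrier S. \<exists>y\<in>Q. act (u,y) w = w}" using act_one[OF w] subgroup.one_closed[OF Q] by auto
  then show "{u\<in>carrier S. \<exists>y\<in>Q. act (u,y) w = w} \<noteq> {}" by auto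
next
  fix a assume "a \<in> {u\<in>carrier S. \<exists>y\<in>Q. act (u,y) w = w}"
  then obtain v where a: "a \<in> carrier S" "v \<in> Q" "act (a,v) w = w" by auto
  have "act (inv\<^bsub>S\<^esub> a, inv\<^bsub>S\<^esub> v) w = w" using act_inv[of a v w] a w subQ[OF Q] by simp
  moreover have "inv\<^bsub>S\<^esub> v \<in> Q" "inv\<^bsub>S\<^esub> a \<in> carrier S" using subgroup.m_inv_closed[OF Q] a by auto
  ultimately show "inv\<^bsub>S\<^esub> a \<in> {u\<in>carrier S. \<exists>y\<in>Q. act (u,y) w = w}" by auto
next
  fix a b assume "a \<in> {u\<in>carrier S. \<exists>y\<in>Q. act (u,y) w = w}" "b \<in> {u\<in>carrier S. \<exists>y\<in>Q. act (u,y) w = w}"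
  then obtain v v' where a: "a \<in> carrier S" "v \<in> Q" "act (a,v) w = w"
    and b: "b \<in> carrier S" "v' \<in> Q" "act (b,v') w = w" by auto
  have "act (a \<otimes>\<^bsub>S\<^esub> b, v \<otimes>\<^bsub>S\<^esub> v') w = w" using act_mult[of a v b v' w] a b w subQ[OF Q] by simp
  moreover have "v \<otimes>\<^bsub>S\<^esub> v' \<in> Q" "a \<otimes>\<^bsub>S\<^esub> b \<in> carrier S" using subgroup.m_closed[OF Q] a b by auto
  ultimately show "a \<otimes>\<^bsub>S\<^esub> b \<in> {u\<in>carrier S. \<exists>y\<in>Q. act (u,y) w = w}" by auto
qed

lemma gset_cyc:
  assumes Q: "subgroup Q S" and x: "x \<in> carrier S" and x': "x' \<in> carrier S" and c: "cyc x = cyc x'"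
  shows "gset Q x = gset Q x'"
proof -
  have "w \<in> gset Q x \<longleftrightarrow> w \<in> gset Q x'" if w: "w \<in> \<Omega>" for w
  proof -
    define A where "A = {u\<in>carrier S. \<exists>y\<in>Q. act (u,y) w = w}"
    have A: "subgroup A S" unfolding A_def using proj_sub[OF Q w] .
    have "w \<in> gset Q x \<longleftrightarrow> x \<in> A" unfolding gset_def A_def using w x by simp
    also have "\<dots> \<longleftrightarrow> cyc x \<subseteq> A" using cyc_min[OF A] cyc_self[OF x] by auto
    also have "\<dots> \<longleftrightarrow> x' \<in> A" using c cyc_min[OF A] cyc_self[OF x'] by auto
    also have "\<dots> \<longleftrightarrow> w \<in> gset Q x'" unfolding gset_def A_def using w x' by simp
    finally show ?thesis .
  qed
  moreover have "gset Q x \<subseteq> \<Omega>" "gset Q x' \<subseteq> \<Omega>" unfolding gset_def by auto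
  ultimately show ?thesis by auto
qed

lemma gset_transport:
  assumes P: "F P \<phi>" and Q: "subgroup Q S" and x: "x \<in> P"
  shows "card (gset Q x) \<le> card (gset Q (\<phi> x))"
proof -
  obtain f where f: "bij_betw f \<Omega> \<Omega>" "\<forall>u\<in>P. \<forall>v\<in>Q. \<forall>x\<in>\<Omega>. act (u,v) x = x \<longrightarrow> act (\<phi> u, v) (f x) = f x"
    using transport[OF P fs_id[OF Q]] by auto
  have "inj_on f (gset Q x)" using f(1) unfolding bij_betw_def gset_def by (auto intro: inj_on_subset)
  moreover have "f ` gset Q x \<subseteq> gset Q (\<phi> x)"
  proof
    fix z assume "z \<in> f ` gset Q x"
    then obtain w y where w: "z = f w" "w \<in> \<Omega>" "y \<in> Q" "act (x,y) w = w" unfolding gset_def by auto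
    then have "act (\<phi> x, y) (f w) = f w" using f(2) x by simp
    moreover have "f w \<in> \<Omega>" using f(1) w(2) bij_betwE by metis
    ultimately show "z \<in> gset Q (\<phi> x)" unfolding gset_def using w by auto
  qed
  moreover have "finite (gset Q (\<phi> x))" unfolding gset_def using bis(1) by simp
  ultimately show ?thesis using card_inj_on_le by metis
qed

definition cls where "cls P = {Q. fconj S F P Q}"

lemma fconj_refl: "subgroup P S \<Longrightarrow> fconj S F P P"
  unfolding fconj_def using fs_id by (intro exI[of _ "\<lambda>x. x"]) simp

lemma fconj_sym: assumes "fconj S F P Q" shows "fconj S F Q P"
proof -
  obtain \<phi> where P: "F P \<phi>" "\<phi> ` P = Q" using assms unfolding fconj_def by auto
  have "F Q (inv_into P \<phi>)" using fs_inv[OF P(1)] P(2) by simp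
  moreover have "inv_into P \<phi> ` Q = P" using P fs_basic[OF P(1)] inv_into_image_cancel[of \<phi> P P] by simp
  ultimately show ?thesis unfolding fconj_def by auto
qed

lemma fconj_trans: assumes "fconj S F P Q" "fconj S F Q Z" shows "fconj S F P Z"
proof -
  obtain \<phi> where P: "F P \<phi>" "\<phi> ` P = Q" using assms unfolding fconj_def by auto
  obtain \<psi> where Q: "F Q \<psi>" "\<psi> ` Q = Z" using assms unfolding fconj_def by auto
  have "F P (\<psi> \<circ> \<phi>)" using fs_comp[OF P(1)] Q(1) P(2) by simp
  moreover have "(\<psi> \<circ> \<phi>) ` P = Z" using P(2) Q(2) image_comp[of \<psi> \<phi> P] by simp
  ultimately show ?thesis unfolding fconj_def by auto
qed

lemma fconj_sub: "fconj S F P Q \<Longrightarrow> subgroup P S \<and> subgroup Q S"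
  unfolding fconj_def using fs_basic fs_img_sub by auto

lemma fconj_card: "fconj S F P Q \<Longrightarrow> card P = card Q"
  unfolding fconj_def using fs_basic card_image by metis

lemma cls_eq: assumes "subgroup P S" shows "cls P = cls Q \<longleftrightarrow> fconj S F P Q"
proof
  assume e: "cls P = cls Q"
  have "P \<in> cls P" unfolding cls_def using fconj_refl[OF assms] by simp
  then have "P \<in> cls Q" using e by simp
  then have "fconj S F Q P" unfolding cls_def by simp
  then show "fconj S F P Q" by (rule fconj_sym)
next
  assume a: "fconj S F P Q"
  show "cls P = cls Q" unfolding cls_def
  proof (rule Collect_cong)
    fix Z show "fconj S F P Z \<longleftrightarrow> fconj S F Q Z"
      using fconj_trans[OF fconj_sym[OF a], of Z] fconj_trans[OF a, of Z] by auto
  qed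
qed

lemma g_le:
  assumes Q: "subgroup Q S" and x: "x \<in> carrier S" and x': "x' \<in> carrier S"
    and c: "fconj S F (cyc x) (cyc x')"
  shows "card (gset Q x) \<le> card (gset Q x')"
proof -
  obtain \<phi> where P: "F (cyc x) \<phi>" "\<phi> ` cyc x = cyc x'" using c unfolding fconj_def by auto
  have "card (gset Q x) \<le> card (gset Q (\<phi> x))" using gset_transport[OF P(1) Q cyc_self[OF x]] .
  moreover have "cyc (\<phi> x) = cyc x'" using cyc_img[OF P(1) cyc_self[OF x]] P(2) by simp
  moreover have "\<phi> x \<in> carrier S" using fs_mem[OF P(1) cyc_self[OF x]] .
  ultimately show ?thesis using gset_cyc[OF Q _ x'] by simp
qed

lemma g_eq:
  assumes Q: "subgroup Q S" and x: "x \<in> carrier S" and x': "x' \<in> carrier S"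
    and c: "fconj S F (cyc x) (cyc x')"
  shows "card (gset Q x) = card (gset Q x')"
  using g_le[OF Q x x' c] g_le[OF Q x' x fconj_sym[OF c]] by simp


definition CC where "CC = (\<lambda>x. cls (cyc x)) ` carrier S"

lemma CC_fin: "finite CC" unfolding CC_def using finS by simp

lemma sub_fin: "subgroup P S \<Longrightarrow> finite P"
  using finS subgroup.subset rev_finite_subset by metis

lemma sub_card_pos: "subgroup P S \<Longrightarrow> card P > 0"
  using sub_fin subgroup.one_closed by (metis card_gt_0_iff empty_iff)

lemma CC_eq: "{C. \<exists>P. subgroup P S \<and> cyclic_group (S\<lparr>carrier := P\<rparr>) \<and> C = cls P} = CC"
proof (intro equalityI subsetI)
    fix C assume "C \<in> {C. \<exists>P. subgroup P S \<and> cyclic_group (S\<lparr>carrier := P\<rparr>) \<and> C = cls P}"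
    then obtain P where P: "subgroup P S" "cyclic_group (S\<lparr>carrier := P\<rparr>)" "C = cls P" by auto
    then obtain x where "x \<in> P" "P = cyc x" using cyclic_iff by auto
    then show "C \<in> CC" unfolding CC_def using P subQ[OF P(1)] by auto
  next
    fix C assume "C \<in> CC"
    then obtain x where x: "x \<in> carrier S" "C = cls (cyc x)" unfolding CC_def by auto
    have "subgroup (cyc x) S" using cyc_sub[OF x(1)] .
    moreover have "cyclic_group (S\<lparr>carrier := cyc x\<rparr>)" using cyclic_iff[OF calculation] cyc_self[OF x(1)] by auto
    ultimately show "C \<in> {C. \<exists>P. subgroup P S \<and> cyclic_group (S\<lparr>carrier := P\<rparr>) \<and> C = cls P}" using x by auto
qed

definition rep where "rep C = (SOME x. x \<in> carrier S \<and> cls (cyc x) = C)"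

lemma rep: assumes "x \<in> carrier S"
  shows "rep (cls (cyc x)) \<in> carrier S \<and> cls (cyc (rep (cls (cyc x)))) = cls (cyc x)"
  unfolding rep_def by (rule someI[of _ x]) (simp add: assms)

definition GQ where "GQ Q C = card (gset Q (rep C))"

lemma g_rep: assumes Q: "subgroup Q S" and x: "x \<in> carrier S"
  shows "card (gset Q x) = GQ Q (cls (cyc x))"
proof -
  have r: "rep (cls (cyc x)) \<in> carrier S" "cls (cyc (rep (cls (cyc x)))) = cls (cyc x)" using rep[OF x] by auto
  have "cls (cyc x) = cls (cyc (rep (cls (cyc x))))" using r(2) by simp
  then have "fconj S F (cyc x) (cyc (rep (cls (cyc x))))" using cls_eq[OF cyc_sub[OF x]] by simp
  then show ?thesis unfolding GQ_def using g_eq[OF Q x r(1)] by simp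
qed

lemma orbc_decomp:
  assumes P: "subgroup P S" and Q: "subgroup Q S"
  shows "orbc P Q * (card P * card Q) = (\<Sum>C\<in>CC. GQ Q C * card {u\<in>P. cls (cyc u) = C})"
proof -
  have "orbc P Q * (card P * card Q) = (\<Sum>u\<in>P. \<Sum>v\<in>Q. N u v)" by (rule burnside_biset[OF P Q])
  also have "\<dots> = (\<Sum>u\<in>P. GQ Q (cls (cyc u)))"
  proof (rule sum.cong[OF refl])
    fix u assume "u \<in> P"
    then have u: "u \<in> carrier S" using subQ[OF P] by simp
    show "(\<Sum>v\<in>Q. N u v) = GQ Q (cls (cyc u))" using g_sum[OF Q u] g_rep[OF Q u] by simp
  qed
  also have "\<dots> = (\<Sum>C\<in>CC. \<Sum>u\<in>{u\<in>P. cls (cyc u) = C}. GQ Q (cls (cyc u)))"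
  proof (rule sum.group[symmetric])
    show "finite P" using sub_fin[OF P] .
    show "finite CC" by (rule CC_fin)
    show "(\<lambda>u. cls (cyc u)) ` P \<subseteq> CC" unfolding CC_def using subQ[OF P] by auto
  qed
  also have "\<dots> = (\<Sum>C\<in>CC. GQ Q C * card {u\<in>P. cls (cyc u) = C})"
  proof (rule sum.cong[OF refl])
    fix C assume "C \<in> CC"
    have "(\<Sum>u\<in>{u\<in>P. cls (cyc u) = C}. GQ Q (cls (cyc u))) = (\<Sum>u\<in>{u\<in>P. cls (cyc u) = C}. GQ Q C)"
      by (rule sum.cong) auto
    then show "(\<Sum>u\<in>{u\<in>P. cls (cyc u) = C}. GQ Q (cls (cyc u))) = GQ Q C * card {u\<in>P. cls (cyc u) = C}"
      by (simp add: mult.commute)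
  qed
  finally show ?thesis .
qed

lemma orbc_rat:
  assumes P: "subgroup P S" and Q: "subgroup Q S"
  shows "(of_nat (orbc P Q) :: rat) = (\<Sum>C\<in>CC. (of_nat (GQ Q C) / of_nat (card Q)) * (of_nat (card {u\<in>P. cls (cyc u) = C}) / of_nat (card P)))"
proof -
  have cp: "(of_nat (card P) :: rat) \<noteq> 0" "(of_nat (card Q) :: rat) \<noteq> 0" using sub_card_pos P Q by auto
  have "(of_nat (orbc P Q) :: rat) * (of_nat (card P) * of_nat (card Q))
      = (\<Sum>C\<in>CC. of_nat (GQ Q C) * of_nat (card {u\<in>P. cls (cyc u) = C}))"
    using arg_cong[OF orbc_decomp[OF P Q], of "of_nat :: nat \<Rightarrow> rat"] by simp
  then have "(of_nat (orbc P Q) :: rat) = (\<Sum>C\<in>CC. of_nat (GQ Q C) * of_nat (card {u\<in>P. cls (cyc u) = C})) / (of_nat (card P) * of_nat (card Q))"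
    using cp by (simp add: field_simps)
  also have "\<dots> = (\<Sum>C\<in>CC. (of_nat (GQ Q C) / of_nat (card Q)) * (of_nat (card {u\<in>P. cls (cyc u) = C}) / of_nat (card P)))"
    by (simp add: sum_divide_distrib ac_simps)
  finally show ?thesis .
qed

lemma rank_upper:
  assumes Ps: "\<forall>P \<in> set Ps. subgroup P S"
  shows "vec_space.rank (length Ps)
           (mat (length Ps) (length Ps) (\<lambda>(i, j). (of_nat (orbc (Ps ! i) (Ps ! j)) :: rat))) \<le> card CC"
proof -
  define n where "n = length Ps"
  define Vf where "Vf C = vec n (\<lambda>i. (of_nat (card {u\<in>Ps ! i. cls (cyc u) = C}) :: rat) / of_nat (card (Ps ! i)))" for C
  have "vec_space.rank n (mat n n (\<lambda>(i, j). (of_nat (orbc (Ps ! i) (Ps ! j)) :: rat))) \<le> card CC"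
  proof (rule vec_space.rank_le_card_comb[where I=CC and Vf=Vf])
    show "mat n n (\<lambda>(i, j). (of_nat (orbc (Ps ! i) (Ps ! j)) :: rat)) \<in> carrier_mat n n" by simp
    show "finite CC" by (rule CC_fin)
    show "Vf ` CC \<subseteq> carrier_vec n" unfolding Vf_def by auto
    fix j assume j: "j < n"
    have Pj: "subgroup (Ps ! j) S" using Ps j unfolding n_def by simp
    show "\<exists>a. col (mat n n (\<lambda>(i, j). (of_nat (orbc (Ps ! i) (Ps ! j)) :: rat))) j = vec n (\<lambda>i. \<Sum>c\<in>CC. a c * Vf c $ i)"
    proof (intro exI[of _ "\<lambda>C. (of_nat (GQ (Ps ! j) C) :: rat) / of_nat (card (Ps ! j))"] eq_vecI)
      fix i assume "i < dim_vec (vec n (\<lambda>i. \<Sum>c\<in>CC. (of_nat (GQ (Ps ! j) c) :: rat) / of_nat (card (Ps ! j)) * Vf c $ i))"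
      then have i: "i < n" by simp
      have Pi: "subgroup (Ps ! i) S" using Ps i unfolding n_def by simp
      show "col (mat n n (\<lambda>(i, j). (of_nat (orbc (Ps ! i) (Ps ! j)) :: rat))) j $ i =
        vec n (\<lambda>i. \<Sum>c\<in>CC. (of_nat (GQ (Ps ! j) c) :: rat) / of_nat (card (Ps ! j)) * Vf c $ i) $ i"
        using j i orbc_rat[OF Pi Pj] unfolding Vf_def by (simp add: ac_simps)
    qed simp
  qed
  then show ?thesis unfolding n_def .
qed


lemma sum_sub:
  assumes P: "subgroup P S"
  shows "(\<Sum>x\<in>P. f x) = (\<Sum>x\<in>carrier S. (if x \<in> P then 1 else 0) * f x :: rat)"
proof -
  have "carrier S \<inter> P = P" using subgroup.subset[OF P] by auto
  then have "(\<Sum>x\<in>P. f x) = (\<Sum>x\<in>carrier S. if x \<in> P then f x else 0)"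
    using sum.inter_restrict[OF finS, of f P] by simp
  also have "\<dots> = (\<Sum>x\<in>carrier S. (if x \<in> P then 1 else 0) * f x)" by (rule sum.cong) auto
  finally show ?thesis .
qed

lemma N_if: assumes "x \<in> carrier S" "y \<in> carrier S"
  shows "(of_nat (N x y) :: rat) = (if fus x y then of_nat (N x x) else 0)"
proof (cases "fus x y")
  case True then show ?thesis using fus_N(1) by simp
next
  case False then have "N x y = 0" using N_pos_fus assms by metis
  then show ?thesis using False by simp
qed

lemma kernel_zero:
  fixes r :: nat and Pa :: "nat \<Rightarrow> 'a set" and v :: "nat \<Rightarrow> rat"
  assumes sub: "\<And>a. a < r \<Longrightarrow> subgroup (Pa a) S"
    and cy: "\<And>a. a < r \<Longrightarrow> \<exists>x\<in>Pa a. Pa a = cyc x"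
    and dist: "\<And>a b. a < r \<Longrightarrow> b < r \<Longrightarrow> fconj S F (Pa a) (Pa b) \<Longrightarrow> a = b"
    and eqs: "\<And>a. a < r \<Longrightarrow> (\<Sum>b<r. of_nat (orbc (Pa a) (Pa b)) * v b) = 0"
  shows "\<forall>a<r. v a = 0"
proof (rule ccontr)
  assume nz: "\<not> (\<forall>a<r. v a = 0)"
  define cp where "cp a = (of_nat (card (Pa a)) :: rat)" for a
  have cp0: "a < r \<Longrightarrow> cp a \<noteq> 0" for a unfolding cp_def using sub_card_pos[OF sub] by simp
  define w where "w b = v b / cp b" for b
  define ind where "ind a x = (if x \<in> Pa a then (1::rat) else 0)" for a x
  define K where "K a b = (\<Sum>x\<in>carrier S. \<Sum>y\<in>carrier S. ind a x * ind b y * of_nat (N x y))" for a b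
  have Kor: "of_nat (orbc (Pa a) (Pa b)) * (cp a * cp b) = K a b" if ab: "a < r" "b < r" for a b
  proof -
    have "of_nat (orbc (Pa a) (Pa b)) * (cp a * cp b) = (\<Sum>u\<in>Pa a. \<Sum>v\<in>Pa b. (of_nat (N u v) :: rat))"
      using arg_cong[OF burnside_biset[OF sub[OF ab(1)] sub[OF ab(2)]], of "of_nat :: nat \<Rightarrow> rat"]
      unfolding cp_def by simp
    also have "\<dots> = (\<Sum>u\<in>carrier S. ind a u * (\<Sum>v\<in>Pa b. (of_nat (N u v) :: rat)))"
      unfolding ind_def by (rule sum_sub[OF sub[OF ab(1)]])
    also have "\<dots> = (\<Sum>u\<in>carrier S. ind a u * (\<Sum>v\<in>carrier S. ind b v * (of_nat (N u v) :: rat)))"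
      unfolding ind_def using sum_sub[OF sub[OF ab(2)]] by simp
    also have "\<dots> = K a b" unfolding K_def by (simp add: sum_distrib_left ac_simps)
    finally show ?thesis .
  qed
  have e1: "(\<Sum>b<r. K a b * w b) = 0" if a: "a < r" for a
  proof -
    have "(\<Sum>b<r. K a b * w b) = (\<Sum>b<r. cp a * (of_nat (orbc (Pa a) (Pa b)) * v b))"
    proof (rule sum.cong[OF refl])
      fix b assume "b \<in> {..<r}"
      then have b: "b < r" by simp
      show "K a b * w b = cp a * (of_nat (orbc (Pa a) (Pa b)) * v b)"
        unfolding Kor[OF a b, symmetric] w_def using cp0[OF b] by (simp add: field_simps)
    qed
    also have "\<dots> = cp a * (\<Sum>b<r. of_nat (orbc (Pa a) (Pa b)) * v b)" by (simp add: sum_distrib_left)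
    also have "\<dots> = 0" using eqs[OF a] by simp
    finally show ?thesis .
  qed
  have e2: "(\<Sum>a<r. w a * (\<Sum>b<r. K a b * w b)) = 0" using e1 by simp
  define W where "W x = (\<Sum>a<r. w a * ind a x)" for x
  define H where "H a b x y = w a * w b * ind a x * ind b y * (of_nat (N x y) :: rat)" for a b x y
  have "(\<Sum>a<r. w a * (\<Sum>b<r. K a b * w b)) = (\<Sum>a<r. \<Sum>b<r. \<Sum>x\<in>carrier S. \<Sum>y\<in>carrier S. H a b x y)"
    unfolding K_def H_def by (simp add: sum_distrib_left sum_distrib_right ac_simps)
  also have "\<dots> = (\<Sum>a<r. \<Sum>x\<in>carrier S. \<Sum>b<r. \<Sum>y\<in>carrier S. H a b x y)"
    by (rule sum.cong[OF refl], rule sum.swap)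
  also have "\<dots> = (\<Sum>x\<in>carrier S. \<Sum>a<r. \<Sum>b<r. \<Sum>y\<in>carrier S. H a b x y)"
    by (rule sum.swap)
  also have "\<dots> = (\<Sum>x\<in>carrier S. \<Sum>a<r. \<Sum>y\<in>carrier S. \<Sum>b<r. H a b x y)"
    by (rule sum.cong[OF refl], rule sum.cong[OF refl], rule sum.swap)
  also have "\<dots> = (\<Sum>x\<in>carrier S. \<Sum>y\<in>carrier S. \<Sum>a<r. \<Sum>b<r. H a b x y)"
    by (rule sum.cong[OF refl], rule sum.swap)
  also have "\<dots> = (\<Sum>x\<in>carrier S. \<Sum>y\<in>carrier S. of_nat (N x y) * W x * W y)"
    unfolding W_def H_def by (simp add: sum_product sum_distrib_left ac_simps)
  finally have e3: "(\<Sum>x\<in>carrier S. \<Sum>y\<in>carrier S. of_nat (N x y) * W x * W y) = 0" using e2 by simp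
  define c where "c x = (of_nat (N x x) :: rat)" for x
  have e4: "(\<Sum>x\<in>carrier S. \<Sum>y\<in>carrier S. (if fus x y then c x else 0) * W x * W y) = 0"
  proof -
    have "(\<Sum>x\<in>carrier S. \<Sum>y\<in>carrier S. (if fus x y then c x else 0) * W x * W y)
        = (\<Sum>x\<in>carrier S. \<Sum>y\<in>carrier S. of_nat (N x y) * W x * W y)"
      by (intro sum.cong refl) (simp add: N_if c_def)
    then show ?thesis using e3 by simp
  qed
  have e5: "\<And>x. x \<in> carrier S \<Longrightarrow> (\<Sum>y\<in>{y\<in>carrier S. fus x y}. W y) = 0"
  proof (rule quad_pos[OF finS _ _ _ _ _ e4])
    show "\<And>x. x \<in> carrier S \<Longrightarrow> fus x x" by (rule fus_refl)
    show "\<And>x y. x \<in> carrier S \<Longrightarrow> y \<in> carrier S \<Longrightarrow> fus x y \<Longrightarrow> fus y x" by (rule fus_sym)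
    show "\<And>x y z. x \<in> carrier S \<Longrightarrow> y \<in> carrier S \<Longrightarrow> z \<in> carrier S \<Longrightarrow> fus x y \<Longrightarrow> fus y z \<Longrightarrow> fus x z"
      by (rule fus_trans)
    show "\<And>x. x \<in> carrier S \<Longrightarrow> 0 < c x" unfolding c_def using N_diag_pos by simp
    show "\<And>x y. x \<in> carrier S \<Longrightarrow> y \<in> carrier S \<Longrightarrow> fus x y \<Longrightarrow> c x = c y"
      unfolding c_def using fus_N by metis
  qed
  define D where "D = {a. a < r \<and> w a \<noteq> 0}"
  have finD: "finite D" unfolding D_def by simp
  obtain a1 where a1: "a1 < r" "v a1 \<noteq> 0" using nz by auto
  have "a1 \<in> D" unfolding D_def w_def using a1 cp0[OF a1(1)] by simp
  then have Dne: "D \<noteq> {}" by auto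
  define mx where "mx = Max ((\<lambda>a. card (Pa a)) ` D)"
  have "mx \<in> (\<lambda>a. card (Pa a)) ` D" unfolding mx_def using finD Dne by (intro Max_in) auto
  then obtain a0 where a0: "a0 \<in> D" "card (Pa a0) = mx" by auto
  have mxge: "\<And>a. a \<in> D \<Longrightarrow> card (Pa a) \<le> mx" unfolding mx_def using finD by (intro Max_ge) auto
  have a0r: "a0 < r" "w a0 \<noteq> 0" using a0(1) unfolding D_def by auto
  obtain g where g: "g \<in> Pa a0" "Pa a0 = cyc g" using cy[OF a0r(1)] by auto
  have gS: "g \<in> carrier S" using subQ[OF sub[OF a0r(1)] g(1)] .
  define Y where "Y = {y\<in>carrier S. fus g y}"
  have finY: "finite Y" unfolding Y_def using finS by simp
  have sY: "(\<Sum>y\<in>Y. W y) = 0" unfolding Y_def using e5[OF gS] .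
  have ind_card: "(\<Sum>y\<in>Y. ind a y) = of_nat (card (Y \<inter> Pa a))" for a
    unfolding ind_def using sum.inter_restrict[OF finY, of "\<lambda>_. 1::rat" "Pa a"] by simp
  have "(\<Sum>y\<in>Y. W y) = (\<Sum>a<r. w a * of_nat (card (Y \<inter> Pa a)))"
  proof -
    have "(\<Sum>y\<in>Y. W y) = (\<Sum>a<r. \<Sum>y\<in>Y. w a * ind a y)" unfolding W_def by (rule sum.swap)
    also have "\<dots> = (\<Sum>a<r. w a * of_nat (card (Y \<inter> Pa a)))"
      by (rule sum.cong[OF refl]) (simp add: sum_distrib_left[symmetric] ind_card)
    finally show ?thesis .
  qed
  also have "\<dots> = w a0 * of_nat (card (Y \<inter> Pa a0))"
  proof -
    have others: "w a * of_nat (card (Y \<inter> Pa a)) = 0" if a: "a \<in> {..<r} - {a0}" for a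
    proof (cases "w a = 0")
      case True then show ?thesis by simp
    next
      case False
      then have aD: "a \<in> D" "a < r" "a \<noteq> a0" using a unfolding D_def by auto
      have "Y \<inter> Pa a = {}"
      proof (rule ccontr)
        assume "Y \<inter> Pa a \<noteq> {}"
        then obtain y where y: "y \<in> carrier S" "fus g y" "y \<in> Pa a" unfolding Y_def by auto
        obtain P \<phi> where P: "F P \<phi>" "g \<in> P" "\<phi> g = y" using y(2) unfolding fus_def by auto
        have Fc: "F (cyc g) \<phi>" using fus_cyc[OF P(1,2)] .
        have "\<phi> ` cyc g = cyc y" using cyc_img[OF P(1,2)] P(3) by simp
        then have fc: "fconj S F (cyc g) (cyc y)" unfolding fconj_def using Fc by auto
        then have c1: "card (cyc y) = card (Pa a0)" using fconj_card g(2) by simp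
        have c2: "cyc y \<subseteq> Pa a" using cyc_min[OF sub[OF aD(2)] y(3)] .
        have c3: "card (Pa a) \<le> card (Pa a0)" using mxge[OF aD(1)] a0(2) by simp
        have "cyc y = Pa a"
          using card_subset_eq[OF sub_fin[OF sub[OF aD(2)]] c2] c1 c3
            card_mono[OF sub_fin[OF sub[OF aD(2)]] c2] by simp
        then have "fconj S F (Pa a0) (Pa a)" using fc g(2) by simp
        then have "a0 = a" using dist[OF a0r(1) aD(2)] by simp
        then show False using aD(3) by simp
      qed
      then show ?thesis by simp
    qed
    have "(\<Sum>a<r. w a * of_nat (card (Y \<inter> Pa a))) = w a0 * of_nat (card (Y \<inter> Pa a0)) + (\<Sum>a\<in>{..<r} - {a0}. w a * of_nat (card (Y \<inter> Pa a)))"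
      using sum.remove[of "{..<r}" a0] a0r(1) by simp
    also have "(\<Sum>a\<in>{..<r} - {a0}. w a * of_nat (card (Y \<inter> Pa a))) = 0"
      using others by (intro sum.neutral) auto
    finally show ?thesis by simp
  qed
  finally have "w a0 * of_nat (card (Y \<inter> Pa a0)) = 0" using sY by simp
  moreover have "g \<in> Y \<inter> Pa a0" unfolding Y_def using gS g(1) fus_refl[OF gS] by simp
  then have "card (Y \<inter> Pa a0) > 0" using finY by (auto simp: card_gt_0_iff)
  ultimately show False using a0r(2) by simp
qed


lemma rank_lower:
  assumes Ps: "\<forall>P \<in> set Ps. subgroup P S"
    and dist: "\<forall>i j. i < length Ps \<and> j < length Ps \<and> fconj S F (Ps ! i) (Ps ! j) \<longrightarrow> i = j"
    and cover: "\<forall>P. subgroup P S \<longrightarrow> (\<exists>Q \<in> set Ps. fconj S F P Q)"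
  shows "card CC \<le> vec_space.rank (length Ps)
           (mat (length Ps) (length Ps) (\<lambda>(i, j). (of_nat (orbc (Ps ! i) (Ps ! j)) :: rat)))"
proof -
  define n where "n = length Ps"
  define M where "M = mat n n (\<lambda>(i, j). (of_nat (orbc (Ps ! i) (Ps ! j)) :: rat))"
  define J where "J = {i. i < n \<and> (\<exists>x\<in>Ps ! i. Ps ! i = cyc x)}"
  have sub: "\<And>i. i < n \<Longrightarrow> subgroup (Ps ! i) S" using Ps unfolding n_def by simp
  have bij: "bij_betw (\<lambda>i. cls (Ps ! i)) J CC"
  proof (rule bij_betw_imageI)
    show "inj_on (\<lambda>i. cls (Ps ! i)) J"
    proof (rule inj_onI)
      fix i j assume ij: "i \<in> J" "j \<in> J" "cls (Ps ! i) = cls (Ps ! j)"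
      then have "fconj S F (Ps ! i) (Ps ! j)" using cls_eq[OF sub] unfolding J_def by simp
      then show "i = j" using dist ij unfolding J_def n_def by simp
    qed
    show "(\<lambda>i. cls (Ps ! i)) ` J = CC"
    proof (intro equalityI subsetI)
      fix C assume "C \<in> (\<lambda>i. cls (Ps ! i)) ` J"
      then obtain i x where i: "i < n" "x \<in> Ps ! i" "Ps ! i = cyc x" "C = cls (Ps ! i)" unfolding J_def by auto
      then have "x \<in> carrier S" using subQ[OF sub[OF i(1)]] by simp
      then show "C \<in> CC" unfolding CC_def using i by auto
    next
      fix C assume "C \<in> CC"
      then obtain x where x: "x \<in> carrier S" "C = cls (cyc x)" unfolding CC_def by auto
      from cover[rule_format, OF cyc_sub[OF x(1)]]
      obtain Q where Q: "Q \<in> set Ps" "fconj S F (cyc x) Q" by (elim bexE)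
      from Q(1) obtain i where i0: "i < length Ps" "Ps ! i = Q" by (meson in_set_conv_nth)
      then have i: "i < n" "Q = Ps ! i" unfolding n_def by simp_all
      obtain \<phi> where \<phi>: "F (cyc x) \<phi>" "\<phi> ` cyc x = Q" using Q(2) unfolding fconj_def by auto
      have "Q = cyc (\<phi> x)" using cyc_img[OF \<phi>(1) cyc_self[OF x(1)]] \<phi>(2) by simp
      moreover have "\<phi> x \<in> \<phi> ` cyc x" using cyc_self[OF x(1)] by (rule imageI)
      then have "\<phi> x \<in> Q" using \<phi>(2) by simp
      ultimately have "Ps ! i = cyc (\<phi> x)" "\<phi> x \<in> Ps ! i" using i(2) by simp_all
      then have "i \<in> J" unfolding J_def mem_Collect_eq using i(1) by (intro conjI bexI)
      moreover have "C = cls (Ps ! i)" using x(2) cls_eq[OF cyc_sub[OF x(1)]] Q(2) i(2) by simp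
      ultimately show "C \<in> (\<lambda>i. cls (Ps ! i)) ` J" by auto
    qed
  qed
  have cardJ: "card J = card CC" using bij_betw_same_card[OF bij] .
  have Jn: "{j. j < n \<and> j \<in> J} = J" unfolding J_def by auto
  have M: "M \<in> carrier_mat n n" unfolding M_def by simp
  define r where "r = card J"
  have dM: "dim_row M = n" "dim_col M = n" unfolding M_def by simp_all
  have Jr: "card {i. i < dim_row M \<and> i \<in> J} = r" "card {i. i < dim_col M \<and> i \<in> J} = r"
    unfolding dM Jn r_def by simp_all
  define sm where "sm = submatrix M J J"
  have sm: "sm \<in> carrier_mat r r" unfolding sm_def by (rule carrier_matI) (simp_all add: dim_submatrix Jr)
  have pk: "pick J a \<in> J" if "a < r" for a using pick_in_set[of a J] that unfolding r_def by simp
  have pkn: "pick J a < n" if "a < r" for a using pk[OF that] unfolding J_def by simp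
  have pkinj: "a = b" if ab: "pick J a = pick J b" "a < r" "b < r" for a b
  proof (rule ccontr)
    assume "a \<noteq> b"
    then consider "a < b" | "b < a" by linarith
    then show False
    proof cases
      case 1 then have "pick J a < pick J b" using pick_mono[of b J a] ab unfolding r_def by simp
      then show False using ab by simp
    next
      case 2 then have "pick J b < pick J a" using pick_mono[of a J b] ab unfolding r_def by simp
      then show False using ab by simp
    qed
  qed
  have "det sm \<noteq> 0"
  proof
    assume "det sm = 0"
    then obtain v where v: "v \<in> carrier_vec r" "v \<noteq> 0\<^sub>v r" "sm *\<^sub>v v = 0\<^sub>v r"
      using det_0_iff_vec_prod_zero_field[OF sm] by auto
    define Pa where "Pa a = Ps ! pick J a" for a
    have "\<forall>a<r. v $ a = 0"
    proof (rule kernel_zero[where Pa=Pa])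
      show "\<And>a. a < r \<Longrightarrow> subgroup (Pa a) S" unfolding Pa_def using sub pkn by simp
      show "\<And>a. a < r \<Longrightarrow> \<exists>x\<in>Pa a. Pa a = cyc x" unfolding Pa_def using pk unfolding J_def by simp
      show "a = b" if ab: "a < r" "b < r" "fconj S F (Pa a) (Pa b)" for a b
      proof -
        have "pick J a = pick J b" using dist pkn[OF ab(1)] pkn[OF ab(2)] ab(3) unfolding n_def Pa_def by simp
        then show ?thesis using pkinj ab by simp
      qed
      fix a assume a: "a < r"
      have dsm: "dim_row sm = r" "dim_col sm = r" "dim_vec v = r" using sm v(1) by auto
      have "(\<Sum>b\<in>{0..<r}. sm $$ (a, b) * v $ b) = (\<Sum>b\<in>{0..<r}. row sm a $ b * v $ b)"
        by (rule sum.cong[OF refl]) (simp add: dsm a)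
      also have "\<dots> = row sm a \<bullet> v" unfolding scalar_prod_def using dsm by simp
      also have "\<dots> = (sm *\<^sub>v v) $ a" using dsm a by simp
      also have "\<dots> = 0" using v(3) a by simp
      finally have "0 = (\<Sum>b\<in>{0..<r}. sm $$ (a, b) * v $ b)" by simp
      also have "\<dots> = (\<Sum>b<r. of_nat (orbc (Pa a) (Pa b)) * v $ b)"
      proof (rule sum.cong)
        show "{0..<r} = {..<r}" by auto
        fix b assume "b \<in> {..<r}"
        then have b: "b < r" by simp
        have "sm $$ (a, b) = M $$ (pick J a, pick J b)"
          unfolding sm_def using submatrix_index[of a M J b J] a b Jr by simp
        also have "\<dots> = of_nat (orbc (Pa a) (Pa b))" unfolding M_def Pa_def using pkn[OF a] pkn[OF b] by simp
        finally show "sm $$ (a, b) * v $ b = of_nat (orbc (Pa a) (Pa b)) * v $ b" by simp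
      qed
      finally show "(\<Sum>b<r. of_nat (orbc (Pa a) (Pa b)) * v $ b) = 0" by simp
    qed
    have "v = 0\<^sub>v r"
    proof (rule eq_vecI)
      show "dim_vec v = dim_vec (0\<^sub>v r)" using v(1) by simp
      fix i assume "i < dim_vec (0\<^sub>v r)"
      then show "v $ i = 0\<^sub>v r $ i" using \<open>\<forall>a<r. v $ a = 0\<close> by simp
    qed
    then show False using v(2) by simp
  qed
  then have d: "det (submatrix M J J) \<noteq> 0" unfolding sm_def .
  have "card {j. j < n \<and> j \<in> J} \<le> vec_space.rank n M"
    by (rule vec_space.rank_gt_minor[OF M d])
  then show ?thesis using Jn cardJ unfolding M_def n_def by simp
qed

end

theorem theorem1p3:
  fixes p :: nat
    and S :: "('a, 'b) monoid_scheme"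
    and F :: "'a set \<Rightarrow> ('a \<Rightarrow> 'a) \<Rightarrow> bool"
    and \<Omega> :: "'c set"
    and L :: "'a \<Rightarrow> 'c \<Rightarrow> 'c"
    and R :: "'c \<Rightarrow> 'a \<Rightarrow> 'c"
    and Ps :: "'a set list"
  assumes "prime p"
    and "group S"
    and "finite (carrier S)"
    and "\<exists>n. card (carrier S) = p ^ n"
    and "saturated_fusion_system p S F"
    and "characteristic_biset p S F \<Omega> L R"
    and "\<forall>P \<in> set Ps. subgroup P S"
    and "\<forall>i j. i < length Ps \<and> j < length Ps \<and> fconj S F (Ps ! i) (Ps ! j) \<longrightarrow> i = j"
    and "\<forall>P. subgroup P S \<longrightarrow> (\<exists>Q \<in> set Ps. fconj S F P Q)"
  shows "vec_space.rank (length Ps)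
           (mat (length Ps) (length Ps)
              (\<lambda>(i, j). (of_nat (biset_orbit_count S \<Omega> L R (Ps ! i) (Ps ! j)) :: rat)))
         = card {C. \<exists>P. subgroup P S \<and> cyclic_group (S\<lparr>carrier := P\<rparr>) \<and> C = {Q. fconj S F P Q}}"
proof -
  have fsys: "fusion_system S F" using assms(5) unfolding saturated_fusion_system_def by simp
  interpret cbs S p F \<Omega> L R
    unfolding cbs_def using assms(1-4,6) fsys by auto
  have "{C. \<exists>P. subgroup P S \<and> cyclic_group (S\<lparr>carrier := P\<rparr>) \<and> C = {Q. fconj S F P Q}} = CC"
    using CC_eq unfolding cls_def .
  moreover have "vec_space.rank (length Ps)
           (mat (length Ps) (length Ps) (\<lambda>(i, j). (of_nat (orbc (Ps ! i) (Ps ! j)) :: rat))) = card CC"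
    using rank_upper[OF assms(7)] rank_lower[OF assms(7-9)] by simp
  ultimately show ?thesis unfolding orbc_def by simp
qed

end
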